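(* Let $E$ be an arbitrary graph, $X\subseteq{\rm Reg}(E)$, $Y={\rm Reg}(E)\setminus X$, and suppose $E$ satisfies Relative Condition (L). Let $A$ be a ring and $\pi:C_K^X(E)\to A$ a ring homomorphism such that (i) $\pi(u)\neq0$ for every vertex $u\in E^0\setminus Y$; (ii) $\pi\big(v-\sum_{e\in s^{-1}(v)}ee^*\big)\ne0$ for every $v\in Y$; and (iii) $\pi\big(\sum_{e\in s^{-1}(v)}ee^*\big)\neq0$ for every $v\in Y$. Then $\pi$ is injective.
   Context: Let $K$ be a field and $E=(E^0,E^1,r,s)$ a directed graph (no countability or finiteness assumptions). A vertex $v$ is regular if $s^{-1}(v)$ is finite and nonempty; ${\rm Reg}(E)$ is the set of regular vertices. For $X\subseteq{\rm Reg}(E)$, the relative Cohn path algebra $C_K^X(E)$ is the free $K$-algebra generated by $E^0\cup E^1\cup\{e^*:e\in E^1\}$ subject to: $vw=\delta_{v,w}v$; $s(e)e=er(e)=e$ and $r(e)e^*=e^*s(e)=e^*$; $e^*f=\delta_{e,f}r(e)$; $v=\sum_{e\in s^{-1}(v)}ee^*$ for every $v\in X$. A cycle is a path $e_1\cdots e_n$ ($n\ge1$) with $r(e_n)=s(e_1)$ and $s(e_i)\ne s(e_j)$ for $i\ne j$. An exit of $e_1\cdots e_n$ is an edge $e$ with $s(e)=s(e_i)$ for some $i$ and $e\ne e_i$. $E$ satisfies Relative Condition (L) (with respect to $X$) if every cycle $e_1\cdots e_n$ with $s(e_i)\notin Y$ for all $i=1,\dots,n$ has an exit. *)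

theory Defs
  imports Main "HOL-Library.Function_Algebras"
begin

text \<open>A directed graph E = (E0, E1, r, s) is given by a vertex set E0 :: 'v set,
an edge set E1 :: 'e set and range/source maps r s :: 'e => 'v
(assumed to map E1 into E0 in the theorem).\<close>

definition Reg :: "'v set \<Rightarrow> 'e set \<Rightarrow> ('e \<Rightarrow> 'v) \<Rightarrow> 'v set" where
  "Reg E0 E1 s = {v \<in> E0. finite {e \<in> E1. s e = v} \<and> {e \<in> E1. s e = v} \<noteq> {}}"

definition is_cycle :: "'e set \<Rightarrow> ('e \<Rightarrow> 'v) \<Rightarrow> ('e \<Rightarrow> 'v) \<Rightarrow> 'e list \<Rightarrow> bool" where
  "is_cycle E1 r s es \<longleftrightarrow> es \<noteq> [] \<and> set es \<subseteq> E1
     \<and> (\<forall>i. Suc i < length es \<longrightarrow> r (es ! i) = s (es ! Suc i))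
     \<and> r (last es) = s (hd es)
     \<and> inj_on (\<lambda>i. s (es ! i)) {..<length es}"

definition has_exit :: "'e set \<Rightarrow> ('e \<Rightarrow> 'v) \<Rightarrow> 'e list \<Rightarrow> bool" where
  "has_exit E1 s es \<longleftrightarrow> (\<exists>e\<in>E1. \<exists>i<length es. s e = s (es ! i) \<and> e \<noteq> es ! i)"

definition rel_condL :: "'v set \<Rightarrow> 'e set \<Rightarrow> ('e \<Rightarrow> 'v) \<Rightarrow> ('e \<Rightarrow> 'v) \<Rightarrow> 'v set \<Rightarrow> bool" where
  "rel_condL E0 E1 r s X \<longleftrightarrow>
     (\<forall>es. is_cycle E1 r s es \<and> (\<forall>i<length es. s (es ! i) \<notin> Reg E0 E1 s - X)
        \<longrightarrow> has_exit E1 s es)"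

datatype ('v, 'e) cgen = Vx 'v | Ed 'e | Gh 'e  \<comment> \<open>Gh e stands for e^*\<close>

text \<open>Elements of the free algebra: finitely supported K-valued functions on
nonempty words in the generators (pointwise addition from Function_Algebras).\<close>
type_synonym ('v, 'e, 'k) fa = "('v, 'e) cgen list \<Rightarrow> 'k"

definition gens :: "'v set \<Rightarrow> 'e set \<Rightarrow> ('v, 'e) cgen set" where
  "gens E0 E1 = Vx ` E0 \<union> Ed ` E1 \<union> Gh ` E1"

definition FA :: "'v set \<Rightarrow> 'e set \<Rightarrow> ('v, 'e, 'k::field) fa set" where
  "FA E0 E1 = {f. finite {w. f w \<noteq> 0} \<and> (\<forall>w. f w \<noteq> 0 \<longrightarrow> w \<noteq> [] \<and> set w \<subseteq> gens E0 E1)}"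

definition fa_mult :: "('v, 'e, 'k::field) fa \<Rightarrow> ('v, 'e, 'k) fa \<Rightarrow> ('v, 'e, 'k) fa" where
  "fa_mult f g = (\<lambda>w. \<Sum>i\<le>length w. f (take i w) * g (drop i w))"

definition fa_smul :: "'k::field \<Rightarrow> ('v, 'e, 'k) fa \<Rightarrow> ('v, 'e, 'k) fa" where
  "fa_smul k f = (\<lambda>w. k * f w)"

definition gen :: "('v, 'e) cgen \<Rightarrow> ('v, 'e, 'k::field) fa" where
  "gen x = (\<lambda>w. if w = [x] then 1 else 0)"

definition ee_sum :: "'e set \<Rightarrow> ('e \<Rightarrow> 'v) \<Rightarrow> 'v \<Rightarrow> ('v, 'e, 'k::field) fa" where
  "ee_sum E1 s v = (\<Sum>e\<in>{e \<in> E1. s e = v}. fa_mult (gen (Ed e)) (gen (Gh e)))"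

definition cohn_rels :: "'v set \<Rightarrow> 'e set \<Rightarrow> ('e \<Rightarrow> 'v) \<Rightarrow> ('e \<Rightarrow> 'v) \<Rightarrow> 'v set
    \<Rightarrow> ('v, 'e, 'k::field) fa set" where
  "cohn_rels E0 E1 r s X =
     {fa_mult (gen (Vx v)) (gen (Vx w)) - (if v = w then gen (Vx v) else 0) | v w. v \<in> E0 \<and> w \<in> E0}
   \<union> {fa_mult (gen (Vx (s e))) (gen (Ed e)) - gen (Ed e) | e. e \<in> E1}
   \<union> {fa_mult (gen (Ed e)) (gen (Vx (r e))) - gen (Ed e) | e. e \<in> E1}
   \<union> {fa_mult (gen (Vx (r e))) (gen (Gh e)) - gen (Gh e) | e. e \<in> E1}
   \<union> {fa_mult (gen (Gh e)) (gen (Vx (s e))) - gen (Gh e) | e. e \<in> E1}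
   \<union> {fa_mult (gen (Gh e)) (gen (Ed f)) - (if e = f then gen (Vx (r e)) else 0) | e f. e \<in> E1 \<and> f \<in> E1}
   \<union> {gen (Vx v) - ee_sum E1 s v | v. v \<in> X}"

inductive_set cohn_ideal :: "'v set \<Rightarrow> 'e set \<Rightarrow> ('e \<Rightarrow> 'v) \<Rightarrow> ('e \<Rightarrow> 'v) \<Rightarrow> 'v set
    \<Rightarrow> ('v, 'e, 'k::field) fa set"
  for E0 E1 r s X where
  rel: "\<rho> \<in> cohn_rels E0 E1 r s X \<Longrightarrow> \<rho> \<in> cohn_ideal E0 E1 r s X"
| zero: "0 \<in> cohn_ideal E0 E1 r s X"
| add: "a \<in> cohn_ideal E0 E1 r s X \<Longrightarrow> b \<in> cohn_ideal E0 E1 r s X \<Longrightarrow> a + b \<in> cohn_ideal E0 E1 r s X"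
| smul: "a \<in> cohn_ideal E0 E1 r s X \<Longrightarrow> fa_smul k a \<in> cohn_ideal E0 E1 r s X"
| lmul: "f \<in> FA E0 E1 \<Longrightarrow> a \<in> cohn_ideal E0 E1 r s X \<Longrightarrow> fa_mult f a \<in> cohn_ideal E0 E1 r s X"
| rmul: "f \<in> FA E0 E1 \<Longrightarrow> a \<in> cohn_ideal E0 E1 r s X \<Longrightarrow> fa_mult a f \<in> cohn_ideal E0 E1 r s X"

definition cclass :: "'v set \<Rightarrow> 'e set \<Rightarrow> ('e \<Rightarrow> 'v) \<Rightarrow> ('e \<Rightarrow> 'v) \<Rightarrow> 'v set
    \<Rightarrow> ('v, 'e, 'k::field) fa \<Rightarrow> ('v, 'e, 'k) fa set" where
  "cclass E0 E1 r s X f = {g \<in> FA E0 E1. g - f \<in> cohn_ideal E0 E1 r s X}"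

definition Cohn :: "'v set \<Rightarrow> 'e set \<Rightarrow> ('e \<Rightarrow> 'v) \<Rightarrow> ('e \<Rightarrow> 'v) \<Rightarrow> 'v set
    \<Rightarrow> ('v, 'e, 'k::field) fa set set" where
  "Cohn E0 E1 r s X = cclass E0 E1 r s X ` FA E0 E1"

definition crep :: "('v, 'e, 'k::field) fa set \<Rightarrow> ('v, 'e, 'k) fa" where
  "crep S = (SOME f. f \<in> S)"

definition cohn_add :: "'v set \<Rightarrow> 'e set \<Rightarrow> ('e \<Rightarrow> 'v) \<Rightarrow> ('e \<Rightarrow> 'v) \<Rightarrow> 'v set
    \<Rightarrow> ('v, 'e, 'k::field) fa set \<Rightarrow> ('v, 'e, 'k) fa set \<Rightarrow> ('v, 'e, 'k) fa set" where
  "cohn_add E0 E1 r s X S T = cclass E0 E1 r s X (crep S + crep T)"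

definition cohn_mult :: "'v set \<Rightarrow> 'e set \<Rightarrow> ('e \<Rightarrow> 'v) \<Rightarrow> ('e \<Rightarrow> 'v) \<Rightarrow> 'v set
    \<Rightarrow> ('v, 'e, 'k::field) fa set \<Rightarrow> ('v, 'e, 'k) fa set \<Rightarrow> ('v, 'e, 'k) fa set" where
  "cohn_mult E0 E1 r s X S T = cclass E0 E1 r s X (fa_mult (crep S) (crep T))"

definition cohn_ring_hom :: "'v set \<Rightarrow> 'e set \<Rightarrow> ('e \<Rightarrow> 'v) \<Rightarrow> ('e \<Rightarrow> 'v) \<Rightarrow> 'v set
    \<Rightarrow> (('v, 'e, 'k::field) fa set \<Rightarrow> 'a::ring) \<Rightarrow> bool" where
  "cohn_ring_hom E0 E1 r s X \<pi> \<longleftrightarrow>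
     (\<forall>S\<in>Cohn E0 E1 r s X. \<forall>T\<in>Cohn E0 E1 r s X.
        \<pi> (cohn_add E0 E1 r s X S T) = \<pi> S + \<pi> T
      \<and> \<pi> (cohn_mult E0 E1 r s X S T) = \<pi> S * \<pi> T)"

end

theory Submission
  imports Defs
begin

lemma sum_pairs_le:
  "(\<Sum>j\<le>n. \<Sum>l\<le>n - j. F j l) = (\<Sum>(j,l)\<in>{(j,l). j + l \<le> (n::nat)}. F j l)"
proof -
  have "{(j,l). j + l \<le> n} = Sigma {..n} (\<lambda>j. {..n - j})" by auto
  then show ?thesis by (simp add: sum.Sigma)
qed

lemma fa_mult_assoc: "fa_mult (fa_mult f g) h = fa_mult f (fa_mult (g::('v,'e,'k::field) fa) h)"
proof
  fix w :: "('v,'e) cgen list"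
  define n where "n = length w"
  define F where "F = (\<lambda>j l. f (take j w) * g (take l (drop j w)) * h (drop (j + l) w))"
  have "fa_mult (fa_mult f g) h w = (\<Sum>k\<le>n. \<Sum>j\<le>k. F j (k - j))"
    unfolding fa_mult_def n_def F_def
    by (auto simp: sum_distrib_right drop_take min_def intro!: sum.cong)
  also have "\<dots> = (\<Sum>(j,l)\<in>{(j,l). j + l \<le> n}. F j l)"
    by (rule sum.triangle_reindex_eq[symmetric])
  also have "\<dots> = (\<Sum>j\<le>n. \<Sum>l\<le>n - j. F j l)" by (rule sum_pairs_le[symmetric])
  also have "\<dots> = fa_mult f (fa_mult g h) w"
    unfolding fa_mult_def n_def F_def
    by (auto simp: sum_distrib_left mult.assoc add.commute intro!: sum.cong)
  finally show "fa_mult (fa_mult f g) h w = fa_mult f (fa_mult g h) w" .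
qed

datatype ('v, 'e, 'k) ser = Ser (unS: "('v, 'e, 'k) fa")

lemma ser_eqI: "unS x = unS y \<Longrightarrow> x = y"
  by (cases x, cases y) auto

definition fa_one :: "('v,'e,'k::field) fa" where
  "fa_one = (\<lambda>w. if w = [] then 1 else 0)"

lemma fa_mult_one_left: "fa_mult fa_one f = f"
proof
  fix w
  have "fa_mult fa_one f w = (\<Sum>i\<le>length w. if i = 0 then f w else 0)"
    unfolding fa_mult_def fa_one_def by (intro sum.cong) auto
  also have "\<dots> = f w" by (simp add: sum.delta)
  finally show "fa_mult fa_one f w = f w" .
qed

lemma fa_mult_one_right: "fa_mult f fa_one = f"
proof
  fix w
  have "fa_mult f fa_one w = (\<Sum>i\<le>length w. if i = length w then f w else 0)"
    unfolding fa_mult_def fa_one_def by (intro sum.cong) auto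
  also have "\<dots> = f w" by (simp add: sum.delta)
  finally show "fa_mult f fa_one w = f w" .
qed

lemma fa_mult_add_left: "fa_mult (f + g) h = fa_mult f h + fa_mult g h"
  unfolding fa_mult_def by (auto simp: sum.distrib distrib_right)

lemma fa_mult_add_right: "fa_mult f (g + h) = fa_mult f g + fa_mult f h"
  unfolding fa_mult_def by (auto simp: sum.distrib distrib_left)

instantiation ser :: (type, type, field) ring_1
begin
definition "0 = Ser 0"
definition "1 = Ser fa_one"
definition "x + y = Ser (unS x + unS y)"
definition "x - y = Ser (unS x - unS y)"
definition "- x = Ser (- unS x)"
definition "x * y = Ser (fa_mult (unS x) (unS y))"
instance
proof
  fix a b c :: "('a,'b,'c) ser"
  show "a * b * c = a * (b * c)" by (simp add: times_ser_def fa_mult_assoc)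
  show "1 * a = a" by (cases a) (simp add: times_ser_def one_ser_def fa_mult_one_left)
  show "a * 1 = a" by (cases a) (simp add: times_ser_def one_ser_def fa_mult_one_right)
  show "(a + b) * c = a * c + b * c" by (simp add: times_ser_def plus_ser_def fa_mult_add_left)
  show "a * (b + c) = a * b + a * c" by (simp add: times_ser_def plus_ser_def fa_mult_add_right)
  show "a + b + c = a + (b + c)" by (simp add: plus_ser_def add.assoc)
  show "a + b = b + a" by (simp add: plus_ser_def add.commute)
  show "0 + a = a" by (cases a) (simp add: plus_ser_def zero_ser_def)
  show "- a + a = 0" by (simp add: plus_ser_def uminus_ser_def zero_ser_def)
  show "a - b = a + - b" by (simp add: plus_ser_def uminus_ser_def minus_ser_def)
  show "(0::('a,'b,'c) ser) \<noteq> 1"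
    by (simp add: zero_ser_def one_ser_def fa_one_def fun_eq_iff)
qed
end

lemma unS_simps[simp]: "unS (x + y) = unS x + unS y" "unS (x - y) = unS x - unS y"
  "unS (- x) = - unS x" "unS (x * y) = fa_mult (unS x) (unS y)" "unS 0 = 0"
  by (simp_all add: plus_ser_def minus_ser_def uminus_ser_def times_ser_def zero_ser_def)

lemma unS_sum: "unS (sum f A) = (\<Sum>a\<in>A. unS (f a))"
  by (induction A rule: infinite_finite_induct) auto

definition sc :: "'k::field \<Rightarrow> ('v,'e,'k) ser \<Rightarrow> ('v,'e,'k) ser" where
  "sc k x = Ser (fa_smul k (unS x))"

lemma unS_sc[simp]: "unS (sc k x) = fa_smul k (unS x)" by (simp add: sc_def)

lemma sc_mult_left[simp]: "sc k x * y = sc k (x * y)"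
  by (rule ser_eqI) (simp add: fa_mult_def fa_smul_def sum_distrib_left mult.assoc)
lemma sc_mult_right[simp]: "x * sc k y = sc k (x * y)"
  by (rule ser_eqI) (simp add: fa_mult_def fa_smul_def sum_distrib_left mult.left_commute)
lemma sc_add[simp]: "sc k (x + y) = sc k x + sc k y"
  by (rule ser_eqI) (simp add: fa_smul_def distrib_left plus_fun_def)
lemma sc_diff[simp]: "sc k (x - y) = sc k x - sc k y"
  by (rule ser_eqI) (simp add: fa_smul_def right_diff_distrib fun_diff_def)
lemma sc_add_left: "sc (k + l) x = sc k x + sc l x"
  by (rule ser_eqI) (simp add: fa_smul_def distrib_right plus_fun_def)
lemma sc_sc[simp]: "sc k (sc l x) = sc (k * l) x"
  by (rule ser_eqI) (simp add: fa_smul_def mult.assoc)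
lemma sc_one[simp]: "sc 1 x = x"
  by (rule ser_eqI) (simp add: fa_smul_def)
lemma sc_zero[simp]: "sc 0 x = 0" "sc k 0 = 0"
  by (rule ser_eqI; simp add: fa_smul_def zero_fun_def)+
lemma sc_minus_one: "sc (-1) x = - x"
  by (rule ser_eqI) (simp add: fa_smul_def fun_Compl_def)
lemma sc_sum: "sc k (sum f A) = (\<Sum>a\<in>A. sc k (f a))"
  by (induction A rule: infinite_finite_induct) auto
lemma sc_sum_left: "sc (sum f A) x = (\<Sum>a\<in>A. sc (f a) x)"
  by (induction A rule: infinite_finite_induct) (auto simp: sc_add_left)

lemma FA_add: "f \<in> FA E0 E1 \<Longrightarrow> g \<in> FA E0 E1 \<Longrightarrow> f + g \<in> FA E0 E1"
proof -
  assume f: "f \<in> FA E0 E1" and g: "g \<in> FA E0 E1"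
  have "{w. (f + g) w \<noteq> 0} \<subseteq> {w. f w \<noteq> 0} \<union> {w. g w \<noteq> 0}" by auto
  then show ?thesis using f g unfolding FA_def by (auto intro: finite_subset)
qed

lemma FA_smul: "f \<in> FA E0 E1 \<Longrightarrow> fa_smul k f \<in> FA E0 E1"
proof -
  assume f: "f \<in> FA E0 E1"
  have "{w. fa_smul k f w \<noteq> 0} \<subseteq> {w. f w \<noteq> 0}" by (auto simp: fa_smul_def)
  then show ?thesis using f unfolding FA_def by (auto intro: finite_subset simp: fa_smul_def)
qed

lemma FA_zero: "0 \<in> FA E0 E1" by (simp add: FA_def)

lemma FA_uminus: "f \<in> FA E0 E1 \<Longrightarrow> - f \<in> FA E0 E1"
proof -
  assume "f \<in> FA E0 E1"
  moreover have "- f = fa_smul (-1) f" by (auto simp: fa_smul_def)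
  ultimately show ?thesis by (simp add: FA_smul)
qed

lemma FA_diff: "f \<in> FA E0 E1 \<Longrightarrow> g \<in> FA E0 E1 \<Longrightarrow> f - g \<in> FA E0 E1"
proof -
  assume "f \<in> FA E0 E1" "g \<in> FA E0 E1"
  moreover have "f - g = f + - g" by (rule diff_conv_add_uminus)
  ultimately show ?thesis by (simp only: FA_add FA_uminus)
qed

lemma FA_mult: "f \<in> FA E0 E1 \<Longrightarrow> g \<in> FA E0 E1 \<Longrightarrow> fa_mult f g \<in> FA E0 E1"
proof -
  assume f: "f \<in> FA E0 E1" and g: "g \<in> FA E0 E1"
  have key: "\<exists>i. f (take i w) \<noteq> 0 \<and> g (drop i w) \<noteq> 0" if "fa_mult f g w \<noteq> 0" for w
  proof (rule ccontr)
    assume "\<not> ?thesis"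
    then have "fa_mult f g w = 0" unfolding fa_mult_def by (intro sum.neutral) auto
    then show False using that by simp
  qed
  have "{w. fa_mult f g w \<noteq> 0} \<subseteq> (\<lambda>(u,v). u @ v) ` ({w. f w \<noteq> 0} \<times> {w. g w \<noteq> 0})"
  proof
    fix w assume "w \<in> {w. fa_mult f g w \<noteq> 0}"
    then have nz: "fa_mult f g w \<noteq> 0" by simp
    obtain i where "f (take i w) \<noteq> 0" "g (drop i w) \<noteq> 0" using key[OF nz] by blast
    then show "w \<in> (\<lambda>(u,v). u @ v) ` ({w. f w \<noteq> 0} \<times> {w. g w \<noteq> 0})"
      by (intro image_eqI[of _ _ "(take i w, drop i w)"]) auto
  qed
  moreover have "finite ((\<lambda>(u,v). u @ v) ` ({w. f w \<noteq> 0} \<times> {w. g w \<noteq> 0}))"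
    using f g unfolding FA_def by auto
  ultimately have fin: "finite {w. fa_mult f g w \<noteq> 0}" by (rule finite_subset)
  have "w \<noteq> [] \<and> set w \<subseteq> gens E0 E1" if nz: "fa_mult f g w \<noteq> 0" for w
  proof -
    obtain i where i: "f (take i w) \<noteq> 0" "g (drop i w) \<noteq> 0" using key[OF nz] by blast
    then have "take i w \<noteq> []" "set (take i w) \<subseteq> gens E0 E1" "set (drop i w) \<subseteq> gens E0 E1"
      using f g unfolding FA_def by auto
    then show ?thesis by (metis append_take_drop_id set_append take_Nil Un_least)
  qed
  with fin show ?thesis unfolding FA_def by auto
qed

lemma FA_sum: "(\<And>a. a \<in> S \<Longrightarrow> f a \<in> FA E0 E1) \<Longrightarrow> sum f S \<in> FA E0 E1"
  by (induction S rule: infinite_finite_induct) (auto intro: FA_add FA_zero)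

lemma FA_gen: "x \<in> gens E0 E1 \<Longrightarrow> gen x \<in> FA E0 E1"
  unfolding FA_def gen_def by auto

lemma ideal_FA:
  assumes "a \<in> cohn_ideal E0 E1 r s X" "\<And>e. e \<in> E1 \<Longrightarrow> s e \<in> E0 \<and> r e \<in> E0" "X \<subseteq> E0"
  shows "a \<in> FA E0 E1"
  using assms(1)
proof (induction a rule: cohn_ideal.induct)
  case (rel \<rho>)
  have gV: "v \<in> E0 \<Longrightarrow> gen (Vx v) \<in> FA E0 E1" for v by (rule FA_gen) (auto simp: gens_def)
  have gE: "e \<in> E1 \<Longrightarrow> gen (Ed e) \<in> FA E0 E1" for e by (rule FA_gen) (auto simp: gens_def)
  have gG: "e \<in> E1 \<Longrightarrow> gen (Gh e) \<in> FA E0 E1" for e by (rule FA_gen) (auto simp: gens_def)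
  have ee: "ee_sum E1 s v \<in> FA E0 E1" for v
    unfolding ee_sum_def by (rule FA_sum) (auto intro: FA_mult gE gG)
  have ifz: "a \<in> FA E0 E1 \<Longrightarrow> (if P then a else 0) \<in> FA E0 E1" for a P by (simp add: FA_zero)
  note I = FA_diff FA_mult gV gE gG ee FA_zero ifz assms(2)[THEN conjunct1] assms(2)[THEN conjunct2]
    subsetD[OF assms(3)]
  from rel.hyps show ?case unfolding cohn_rels_def
    apply (elim UnE)
    apply (blast intro: I)+
    done
next
  case zero show ?case by (rule FA_zero)
next
  case (add a b) then show ?case by (intro FA_add)
next
  case (smul a k) then show ?case by (intro FA_smul)
next
  case (lmul f a) then show ?case by (intro FA_mult)
next
  case (rmul f a) then show ?case by (intro FA_mult)
qed

locale cg =
  fixes E0 :: "'v set" and E1 :: "'e set" and r s :: "'e \<Rightarrow> 'v" and X :: "'v set"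
  assumes gs: "s ` E1 \<subseteq> E0" and gr: "r ` E1 \<subseteq> E0" and XReg: "X \<subseteq> Reg E0 E1 s"
begin

lemma sE0[simp]: "e \<in> E1 \<Longrightarrow> s e \<in> E0" using gs by auto
lemma rE0[simp]: "e \<in> E1 \<Longrightarrow> r e \<in> E0" using gr by auto
lemma XE0: "X \<subseteq> E0" using XReg by (auto simp: Reg_def)

definition A :: "('v,'e,'k::field) ser \<Rightarrow> bool" where "A x \<longleftrightarrow> unS x \<in> FA E0 E1"
definition J :: "('v,'e,'k::field) ser \<Rightarrow> bool" where "J x \<longleftrightarrow> unS x \<in> cohn_ideal E0 E1 r s X"
definition eqv :: "('v,'e,'k::field) ser \<Rightarrow> ('v,'e,'k) ser \<Rightarrow> bool" (infix "\<approx>" 50)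
  where "x \<approx> y \<longleftrightarrow> J (x - y)"

definition Vt :: "'v \<Rightarrow> ('v,'e,'k::field) ser" where "Vt v = Ser (gen (Vx v))"
definition Et :: "'e \<Rightarrow> ('v,'e,'k::field) ser" where "Et e = Ser (gen (Ed e))"
definition Gt :: "'e \<Rightarrow> ('v,'e,'k::field) ser" where "Gt e = Ser (gen (Gh e))"
definition EG :: "'v \<Rightarrow> ('v,'e,'k::field) ser" where "EG v = (\<Sum>e\<in>{e\<in>E1. s e = v}. Et e * Gt e)"
definition Q :: "'v \<Rightarrow> ('v,'e,'k::field) ser" where "Q v = Vt v - EG v"

lemma unS_EG: "unS (EG v) = ee_sum E1 s v"
  by (simp add: EG_def ee_sum_def unS_sum Et_def Gt_def)

lemma A_add[intro!]: "A x \<Longrightarrow> A y \<Longrightarrow> A (x + y)" by (simp add: A_def FA_add)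
lemma A_diff[intro!]: "A x \<Longrightarrow> A y \<Longrightarrow> A (x - y)" by (simp add: A_def FA_diff)
lemma A_uminus[intro!]: "A x \<Longrightarrow> A (- x)" by (simp add: A_def FA_uminus)
lemma A_mult[intro!]: "A x \<Longrightarrow> A y \<Longrightarrow> A (x * y)" by (simp add: A_def FA_mult)
lemma A_sc[intro!]: "A x \<Longrightarrow> A (sc k x)" by (simp add: A_def FA_smul)
lemma A_zero[intro!, simp]: "A 0" by (simp add: A_def FA_zero)
lemma A_sum[intro!]: "(\<And>a. a \<in> S \<Longrightarrow> A (f a)) \<Longrightarrow> A (sum f S)"
  by (simp add: A_def unS_sum FA_sum)
lemma A_Vt[intro!, simp]: "v \<in> E0 \<Longrightarrow> A (Vt v)" by (auto simp: A_def Vt_def intro!: FA_gen simp: gens_def)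
lemma A_Et[intro!, simp]: "e \<in> E1 \<Longrightarrow> A (Et e)" by (auto simp: A_def Et_def intro!: FA_gen simp: gens_def)
lemma A_Gt[intro!, simp]: "e \<in> E1 \<Longrightarrow> A (Gt e)" by (auto simp: A_def Gt_def intro!: FA_gen simp: gens_def)
lemma A_EG[intro!, simp]: "A (EG v)" unfolding EG_def by auto
lemma A_Q[intro!, simp]: "v \<in> E0 \<Longrightarrow> A (Q v)" unfolding Q_def by auto

lemma J_A: "J x \<Longrightarrow> A x"
  unfolding J_def A_def using ideal_FA[of _ E0 E1 r s X] XE0 by auto
lemma J_zero[intro!, simp]: "J 0" by (simp add: J_def cohn_ideal.zero)
lemma J_add[intro!]: "J x \<Longrightarrow> J y \<Longrightarrow> J (x + y)" by (simp add: J_def cohn_ideal.add)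
lemma J_sc[intro!]: "J x \<Longrightarrow> J (sc k x)" by (simp add: J_def cohn_ideal.smul)
lemma J_uminus[intro!]: "J x \<Longrightarrow> J (- x)" using J_sc[of x "-1"] by (simp add: sc_minus_one)
lemma J_diff[intro!]: "J x \<Longrightarrow> J y \<Longrightarrow> J (x - y)" using J_add[of x "-y"] by auto
lemma J_lmul[intro]: "A z \<Longrightarrow> J x \<Longrightarrow> J (z * x)" by (simp add: J_def A_def cohn_ideal.lmul)
lemma J_rmul[intro]: "A z \<Longrightarrow> J x \<Longrightarrow> J (x * z)" by (simp add: J_def A_def cohn_ideal.rmul)
lemma J_sum[intro!]: "(\<And>a. a \<in> S \<Longrightarrow> J (f a)) \<Longrightarrow> J (sum f S)"
  by (induction S rule: infinite_finite_induct) auto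
lemma J_rel: "unS x \<in> cohn_rels E0 E1 r s X \<Longrightarrow> J x" by (simp add: J_def cohn_ideal.rel)

lemma eqv_refl[intro!, simp]: "x \<approx> x" by (simp add: eqv_def)
lemma eqv_sym: "x \<approx> y \<Longrightarrow> y \<approx> x"
proof -
  assume "x \<approx> y"
  then have "J (- (x - y))" unfolding eqv_def by (rule J_uminus)
  moreover have "- (x - y) = y - x" by (rule minus_diff_eq)
  ultimately show ?thesis unfolding eqv_def by simp
qed
lemma eqv_trans[trans]: "x \<approx> y \<Longrightarrow> y \<approx> z \<Longrightarrow> x \<approx> z"
proof -
  assume "x \<approx> y" "y \<approx> z"
  then have "J ((x - y) + (y - z))" unfolding eqv_def by (rule J_add)
  moreover have "(x - y) + (y - z) = x - z" by simp
  ultimately show ?thesis unfolding eqv_def by simp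
qed
lemma eqv_add[intro]: "x \<approx> y \<Longrightarrow> x' \<approx> y' \<Longrightarrow> x + x' \<approx> y + y'"
proof -
  assume "x \<approx> y" "x' \<approx> y'"
  then have "J ((x - y) + (x' - y'))" unfolding eqv_def by (rule J_add)
  moreover have "(x - y) + (x' - y') = (x + x') - (y + y')" by (simp add: algebra_simps)
  ultimately show ?thesis unfolding eqv_def by simp
qed
lemma eqv_diff[intro]: "x \<approx> y \<Longrightarrow> x' \<approx> y' \<Longrightarrow> x - x' \<approx> y - y'"
proof -
  assume "x \<approx> y" "x' \<approx> y'"
  then have "J ((x - y) - (x' - y'))" unfolding eqv_def by (rule J_diff)
  moreover have "(x - y) - (x' - y') = (x - x') - (y - y')" by (simp add: algebra_simps)
  ultimately show ?thesis unfolding eqv_def by simp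
qed
lemma eqv_uminus[intro]: "x \<approx> y \<Longrightarrow> - x \<approx> - y"
  using eqv_diff[of 0 0 x y] by simp
lemma eqv_sc[intro]: "x \<approx> y \<Longrightarrow> sc k x \<approx> sc k y"
  unfolding eqv_def using J_sc[of "x - y" k] by simp
lemma eqv_lmul[intro]: "A z \<Longrightarrow> x \<approx> y \<Longrightarrow> z * x \<approx> z * y"
proof -
  assume "A z" "x \<approx> y"
  then have "J (z * (x - y))" unfolding eqv_def by (rule J_lmul)
  moreover have "z * (x - y) = z * x - z * y" by (rule right_diff_distrib)
  ultimately show ?thesis unfolding eqv_def by simp
qed
lemma eqv_rmul[intro]: "A z \<Longrightarrow> x \<approx> y \<Longrightarrow> x * z \<approx> y * z"
proof -
  assume "A z" "x \<approx> y"
  then have "J ((x - y) * z)" unfolding eqv_def by (rule J_rmul)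
  moreover have "(x - y) * z = x * z - y * z" by (rule left_diff_distrib)
  ultimately show ?thesis unfolding eqv_def by simp
qed
lemma eqv_mult: "A x \<Longrightarrow> A y' \<Longrightarrow> x \<approx> y \<Longrightarrow> x' \<approx> y' \<Longrightarrow> x * x' \<approx> y * y'"
  by (meson eqv_lmul eqv_rmul eqv_trans)
lemma eqv_sum[intro]: "(\<And>a. a \<in> S \<Longrightarrow> f a \<approx> g a) \<Longrightarrow> sum f S \<approx> sum g S"
proof -
  assume "\<And>a. a \<in> S \<Longrightarrow> f a \<approx> g a"
  then have "J (\<Sum>a\<in>S. f a - g a)" unfolding eqv_def by (intro J_sum)
  then show ?thesis unfolding eqv_def by (simp add: sum_subtractf)
qed
lemma eqv_A: "A x \<Longrightarrow> x \<approx> y \<Longrightarrow> A y"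
proof -
  assume "A x" "x \<approx> y"
  then have "A (x - (x - y))" unfolding eqv_def by (metis A_diff J_A)
  then show ?thesis by simp
qed
lemma eqv_zero_A: "x \<approx> 0 \<Longrightarrow> A x"
  unfolding eqv_def using J_A by simp

lemma rel_VV: "v \<in> E0 \<Longrightarrow> w \<in> E0 \<Longrightarrow> Vt v * Vt w \<approx> (if v = w then Vt v else 0)"
  unfolding eqv_def apply (rule J_rel)
  apply (subgoal_tac "unS (Vt v * Vt w - (if v = w then Vt v else 0)) = fa_mult (gen (Vx v)) (gen (Vx w)) - (if v = w then gen (Vx v) else 0)")
   apply (simp only: cohn_rels_def) apply blast
  by (simp add: Vt_def)
lemma rel_VE: "e \<in> E1 \<Longrightarrow> Vt (s e) * Et e \<approx> Et e"
  unfolding eqv_def apply (rule J_rel)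
  apply (subgoal_tac "unS (Vt (s e) * Et e - Et e) = fa_mult (gen (Vx (s e))) (gen (Ed e)) - gen (Ed e)")
   apply (simp only: cohn_rels_def) apply blast
  by (simp add: Vt_def Et_def)
lemma rel_EV: "e \<in> E1 \<Longrightarrow> Et e * Vt (r e) \<approx> Et e"
  unfolding eqv_def apply (rule J_rel)
  apply (subgoal_tac "unS (Et e * Vt (r e) - Et e) = fa_mult (gen (Ed e)) (gen (Vx (r e))) - gen (Ed e)")
   apply (simp only: cohn_rels_def) apply blast
  by (simp add: Vt_def Et_def)
lemma rel_VG: "e \<in> E1 \<Longrightarrow> Vt (r e) * Gt e \<approx> Gt e"
  unfolding eqv_def apply (rule J_rel)
  apply (subgoal_tac "unS (Vt (r e) * Gt e - Gt e) = fa_mult (gen (Vx (r e))) (gen (Gh e)) - gen (Gh e)")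
   apply (simp only: cohn_rels_def) apply blast
  by (simp add: Vt_def Gt_def)
lemma rel_GV: "e \<in> E1 \<Longrightarrow> Gt e * Vt (s e) \<approx> Gt e"
  unfolding eqv_def apply (rule J_rel)
  apply (subgoal_tac "unS (Gt e * Vt (s e) - Gt e) = fa_mult (gen (Gh e)) (gen (Vx (s e))) - gen (Gh e)")
   apply (simp only: cohn_rels_def) apply blast
  by (simp add: Vt_def Gt_def)
lemma rel_GE: "e \<in> E1 \<Longrightarrow> f \<in> E1 \<Longrightarrow> Gt e * Et f \<approx> (if e = f then Vt (r e) else 0)"
  unfolding eqv_def apply (rule J_rel)
  apply (subgoal_tac "unS (Gt e * Et f - (if e = f then Vt (r e) else 0)) = fa_mult (gen (Gh e)) (gen (Ed f)) - (if e = f then gen (Vx (r e)) else 0)")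
   apply (simp only: cohn_rels_def) apply blast
  by (simp add: Vt_def Gt_def Et_def)
lemma rel_X: "v \<in> X \<Longrightarrow> Vt v \<approx> EG v"
  unfolding eqv_def apply (rule J_rel)
  apply (subgoal_tac "unS (Vt v - EG v) = gen (Vx v) - ee_sum E1 s v")
   apply (simp only: cohn_rels_def) apply blast
  by (simp add: Vt_def unS_EG)

end

context cg
begin

lemma eqv_zero_mult: "A z \<Longrightarrow> x \<approx> 0 \<Longrightarrow> z * x \<approx> 0" using eqv_lmul[of z x 0] by simp
lemma eqv_zero_mult2: "A z \<Longrightarrow> x \<approx> 0 \<Longrightarrow> x * z \<approx> 0" using eqv_rmul[of z x 0] by simp

lemma V_V: "u \<in> E0 \<Longrightarrow> v \<in> E0 \<Longrightarrow> Vt u * Vt v \<approx> (if u = v then Vt u else 0)"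
  by (rule rel_VV)

lemma V_E: assumes "u \<in> E0" "e \<in> E1" shows "Vt u * Et e \<approx> (if u = s e then Et e else 0)"
proof (cases "u = s e")
  case True then show ?thesis using rel_VE[OF assms(2)] by simp
next
  case False
  have "Vt u * Et e \<approx> Vt u * (Vt (s e) * Et e)" using assms by (intro eqv_lmul eqv_sym[OF rel_VE]) auto
  also have "\<dots> = (Vt u * Vt (s e)) * Et e" by (simp add: mult.assoc)
  also have "\<dots> \<approx> 0 * Et e" using assms False rel_VV[of u "s e"] by (intro eqv_rmul) auto
  finally show ?thesis using False by simp
qed

lemma E_V: assumes "u \<in> E0" "e \<in> E1" shows "Et e * Vt u \<approx> (if u = r e then Et e else 0)"
proof (cases "u = r e")
  case True then show ?thesis using rel_EV[OF assms(2)] by simp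
next
  case False
  have "Et e * Vt u \<approx> (Et e * Vt (r e)) * Vt u" using assms by (intro eqv_rmul eqv_sym[OF rel_EV]) auto
  also have "\<dots> = Et e * (Vt (r e) * Vt u)" by (simp add: mult.assoc)
  also have "\<dots> \<approx> Et e * 0" using assms False rel_VV[of "r e" u] by (intro eqv_lmul) auto
  finally show ?thesis using False by simp
qed

lemma V_G: assumes "u \<in> E0" "e \<in> E1" shows "Vt u * Gt e \<approx> (if u = r e then Gt e else 0)"
proof (cases "u = r e")
  case True then show ?thesis using rel_VG[OF assms(2)] by simp
next
  case False
  have "Vt u * Gt e \<approx> Vt u * (Vt (r e) * Gt e)" using assms by (intro eqv_lmul eqv_sym[OF rel_VG]) auto
  also have "\<dots> = (Vt u * Vt (r e)) * Gt e" by (simp add: mult.assoc)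
  also have "\<dots> \<approx> 0 * Gt e" using assms False rel_VV[of u "r e"] by (intro eqv_rmul) auto
  finally show ?thesis using False by simp
qed

lemma G_V: assumes "u \<in> E0" "e \<in> E1" shows "Gt e * Vt u \<approx> (if u = s e then Gt e else 0)"
proof (cases "u = s e")
  case True then show ?thesis using rel_GV[OF assms(2)] by simp
next
  case False
  have "Gt e * Vt u \<approx> (Gt e * Vt (s e)) * Vt u" using assms by (intro eqv_rmul eqv_sym[OF rel_GV]) auto
  also have "\<dots> = Gt e * (Vt (s e) * Vt u)" by (simp add: mult.assoc)
  also have "\<dots> \<approx> Gt e * 0" using assms False rel_VV[of "s e" u] by (intro eqv_lmul) auto
  finally show ?thesis using False by simp
qed

lemma G_E: "e \<in> E1 \<Longrightarrow> f \<in> E1 \<Longrightarrow> Gt e * Et f \<approx> (if e = f then Vt (r e) else 0)"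
  by (rule rel_GE)

definition src :: "'v \<Rightarrow> 'e list \<Rightarrow> 'v" where
  "src w es = (if es = [] then w else s (hd es))"

fun pw :: "'v \<Rightarrow> 'e list \<Rightarrow> bool" where
  "pw w [] \<longleftrightarrow> w \<in> E0"
| "pw w (e # es) \<longleftrightarrow> e \<in> E1 \<and> r e = src w es \<and> pw w es"

fun PP :: "'v \<Rightarrow> 'e list \<Rightarrow> ('v,'e,'k::field) ser" where
  "PP w [] = Vt w"
| "PP w (e # es) = Et e * PP w es"

fun GG :: "'v \<Rightarrow> 'e list \<Rightarrow> ('v,'e,'k::field) ser" where
  "GG w [] = Vt w"
| "GG w (e # es) = GG w es * Gt e"

lemma src_Nil[simp]: "src w [] = w" and src_Cons[simp]: "src w (e # es) = s e"
  by (auto simp: src_def)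

lemma pw_E0: "pw w es \<Longrightarrow> w \<in> E0" by (induction es) auto
lemma pw_src: "pw w es \<Longrightarrow> src w es \<in> E0" by (cases es) (auto dest: pw_E0)
lemma pw_set: "pw w es \<Longrightarrow> set es \<subseteq> E1" by (induction es) auto

lemma A_PP[intro, simp]: "pw w es \<Longrightarrow> A (PP w es :: ('v,'e,'k::field) ser)"
  by (induction es) auto
lemma A_GG[intro, simp]: "pw w es \<Longrightarrow> A (GG w es :: ('v,'e,'k::field) ser)"
  by (induction es) auto

lemma PP_V: "pw w es \<Longrightarrow> u \<in> E0 \<Longrightarrow> (PP w es :: ('v,'e,'k::field) ser) * Vt u \<approx> (if u = w then PP w es else 0)"
proof (induction es)
  case Nil then show ?case using V_V[of w u] by (auto split: if_splits)
next
  case (Cons e es)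
  then have "Et e * (PP w es * Vt u) \<approx> Et e * (if u = w then PP w es else (0::('v,'e,'k) ser))"
    by (intro eqv_lmul) auto
  then show ?case by (simp add: mult.assoc split: if_splits)
qed

lemma V_PP: "pw w es \<Longrightarrow> u \<in> E0 \<Longrightarrow> Vt u * (PP w es :: ('v,'e,'k::field) ser) \<approx> (if u = src w es then PP w es else 0)"
proof (cases es)
  case Nil
  assume "pw w es" "u \<in> E0"
  then show ?thesis using Nil V_V[of u w] by (auto dest: pw_E0)
next
  case (Cons e es')
  assume h: "pw w es" "u \<in> E0"
  then have "Vt u * Et e * PP w es' \<approx> (if u = s e then Et e else 0) * (PP w es' :: ('v,'e,'k) ser)"
    using Cons by (intro eqv_rmul V_E) auto
  then show ?thesis using Cons by (cases "u = s e") (simp_all add: mult.assoc)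
qed

lemma GG_V: "pw w es \<Longrightarrow> u \<in> E0 \<Longrightarrow> (GG w es :: ('v,'e,'k::field) ser) * Vt u \<approx> (if u = src w es then GG w es else 0)"
proof (cases es)
  case Nil
  assume "pw w es" "u \<in> E0"
  then show ?thesis using Nil V_V[of w u] by (auto dest: pw_E0)
next
  case (Cons e es')
  assume h: "pw w es" "u \<in> E0"
  then have "GG w es' * (Gt e * Vt u) \<approx> (GG w es' :: ('v,'e,'k) ser) * (if u = s e then Gt e else 0)"
    using Cons by (intro eqv_lmul G_V) auto
  then show ?thesis using Cons by (cases "u = s e") (simp_all add: mult.assoc)
qed

lemma V_GG: "pw w es \<Longrightarrow> u \<in> E0 \<Longrightarrow> Vt u * (GG w es :: ('v,'e,'k::field) ser) \<approx> (if u = w then GG w es else 0)"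
proof (induction es)
  case Nil then show ?case using V_V[of u w] by (auto split: if_splits)
next
  case (Cons e es)
  then have "(Vt u * GG w es) * Gt e \<approx> (if u = w then GG w es else (0::('v,'e,'k) ser)) * Gt e"
    by (intro eqv_rmul) auto
  then show ?case by (simp add: mult.assoc split: if_splits)
qed

lemma PP_snoc: "pw w es \<Longrightarrow> e \<in> E1 \<Longrightarrow> s e = w \<Longrightarrow>
  (PP w es :: ('v,'e,'k::field) ser) * Et e \<approx> PP (r e) (es @ [e]) \<and> pw (r e) (es @ [e])"
proof (induction es)
  case Nil
  have "Vt w * Et e \<approx> (Et e :: ('v,'e,'k) ser)" using V_E[of w e] Nil by auto
  moreover have "Et e * Vt (r e) \<approx> (Et e :: ('v,'e,'k) ser)" using rel_EV Nil by auto
  ultimately show ?case using Nil by (auto intro: eqv_trans eqv_sym)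
next
  case (Cons x xs)
  then have "Et x * (PP w xs * Et e) \<approx> Et x * (PP (r e) (xs @ [e]) :: ('v,'e,'k) ser)" by (intro eqv_lmul) auto
  with Cons show ?case by (cases xs) (auto simp: mult.assoc)
qed

lemma GG_snoc: "pw w es \<Longrightarrow> e \<in> E1 \<Longrightarrow> s e = w \<Longrightarrow>
  Gt e * (GG w es :: ('v,'e,'k::field) ser) \<approx> GG (r e) (es @ [e]) \<and> pw (r e) (es @ [e])"
proof (induction es)
  case Nil
  have "Gt e * Vt w \<approx> (Gt e :: ('v,'e,'k) ser)" using G_V[of w e] Nil by auto
  moreover have "Vt (r e) * Gt e \<approx> (Gt e :: ('v,'e,'k) ser)" using rel_VG Nil by auto
  ultimately show ?case using Nil by (auto intro: eqv_trans eqv_sym)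
next
  case (Cons x xs)
  then have "(Gt e * GG w xs) * Gt x \<approx> (GG (r e) (xs @ [e]) :: ('v,'e,'k) ser) * Gt x" by (intro eqv_rmul) auto
  with Cons show ?case by (cases xs) (auto simp: mult.assoc)
qed

lemma GG_PP: "pw w g0 \<Longrightarrow> pw w g \<Longrightarrow> length g0 \<le> length g \<Longrightarrow>
  (GG w g0 :: ('v,'e,'k::field) ser) * PP w g \<approx>
    (if take (length g0) g = g0 \<and> src w (drop (length g0) g) = w then PP w (drop (length g0) g) else 0)"
proof (induction g0 arbitrary: g)
  case Nil then show ?case using V_PP[of w g w] by (auto dest: pw_E0)
next
  case (Cons e es)
  then obtain f fs where g: "g = f # fs" by (cases g) auto
  have "GG w (e # es) * PP w g = GG w es * (Gt e * Et f) * PP w fs"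
    using g by (simp add: mult.assoc)
  also have "\<dots> \<approx> GG w es * (if e = f then Vt (r e) else 0) * PP w fs"
    using Cons.prems g by (intro eqv_rmul eqv_lmul G_E) auto
  finally have 1: "GG w (e # es) * PP w g \<approx> GG w es * (if e = f then Vt (r e) else 0) * PP w fs" .
  show ?case
  proof (cases "e = f")
    case False then show ?thesis using 1 g by simp
  next
    case True
    have "GG w es * Vt (r e) * PP w fs \<approx> GG w es * (PP w fs :: ('v,'e,'k) ser)"
      using Cons.prems g GG_V[of w es "r e"] pw_src[of w es] by (intro eqv_rmul) auto
    also have "\<dots> \<approx> (if take (length es) fs = es \<and> src w (drop (length es) fs) = w then PP w (drop (length es) fs) else 0)"
      by (rule Cons.IH) (use Cons.prems g in auto)
    finally show ?thesis using 1 True g by (auto intro: eqv_trans)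
  qed
qed

end

context cg
begin

definition Sv :: "'v \<Rightarrow> 'e set" where "Sv b = {e \<in> E1. s e = b}"

lemma Reg_fin: "b \<in> Reg E0 E1 s \<Longrightarrow> finite (Sv b)" by (simp add: Reg_def Sv_def)
lemma EG_Sv: "EG b = (\<Sum>e\<in>Sv b. Et e * Gt e)" by (simp add: EG_def Sv_def)

lemma GE_same: "e \<in> E1 \<Longrightarrow> Gt e * Et e \<approx> Vt (r e)" using rel_GE[of e e] by simp
lemma GE_diff: "e \<in> E1 \<Longrightarrow> f \<in> E1 \<Longrightarrow> e \<noteq> f \<Longrightarrow> Gt e * Et f \<approx> 0" using rel_GE[of e f] by simp
lemma G_E_if: "e \<in> E1 \<Longrightarrow> f \<in> E1 \<Longrightarrow> Gt e * Et f \<approx> (if e = f then Vt (r e) else 0)" by (rule rel_GE)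

lemma Q_E: assumes b: "b \<in> Reg E0 E1 s" and e: "e \<in> E1" "s e = b"
  shows "Q b * (Et e :: ('v,'e,'k::field) ser) \<approx> 0"
proof -
  have fin: "finite (Sv b)" using b by (rule Reg_fin)
  have eS: "e \<in> Sv b" using e by (simp add: Sv_def)
  have "EG b * Et e = (\<Sum>f\<in>Sv b. Et f * (Gt f * (Et e :: ('v,'e,'k) ser)))"
    by (simp add: EG_Sv sum_distrib_right mult.assoc)
  also have "\<dots> \<approx> (\<Sum>f\<in>Sv b. Et f * (if f = e then Vt (r f) else (0 :: ('v,'e,'k) ser)))"
    using e by (intro eqv_sum eqv_lmul) (auto simp: Sv_def intro: GE_same GE_diff)
  also have "\<dots> = Et e * Vt (r e)"
    using fin eS by (simp add: if_distrib[of "\<lambda>z. Et _ * z"] sum.delta' cong: if_cong)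
  also have "\<dots> \<approx> Et e" using e(1) by (rule rel_EV)
  finally have 1: "EG b * Et e \<approx> (Et e :: ('v,'e,'k) ser)" .
  have 2: "Vt b * Et e \<approx> (Et e :: ('v,'e,'k) ser)" using V_E[of b e] e by auto
  have "Q b * Et e = Vt b * Et e - EG b * (Et e :: ('v,'e,'k) ser)" by (simp add: Q_def left_diff_distrib)
  also have "\<dots> \<approx> Et e - Et e" using 2 1 by (rule eqv_diff)
  finally show ?thesis by simp
qed

lemma G_Q: assumes b: "b \<in> Reg E0 E1 s" and e: "e \<in> E1" "s e = b"
  shows "(Gt e :: ('v,'e,'k::field) ser) * Q b \<approx> 0"
proof -
  have fin: "finite (Sv b)" using b by (rule Reg_fin)
  have eS: "e \<in> Sv b" using e by (simp add: Sv_def)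
  have "Gt e * EG b = (\<Sum>f\<in>Sv b. ((Gt e :: ('v,'e,'k) ser) * Et f) * Gt f)"
    by (simp add: EG_Sv sum_distrib_left mult.assoc)
  also have "\<dots> \<approx> (\<Sum>f\<in>Sv b. (if e = f then Vt (r e) else (0 :: ('v,'e,'k) ser)) * Gt f)"
    using e by (intro eqv_sum eqv_rmul) (auto simp: Sv_def intro: GE_same GE_diff)
  also have "\<dots> = Vt (r e) * Gt e"
    using fin eS by (simp add: if_distrib[of "\<lambda>z. z * Gt _"] sum.delta cong: if_cong)
  also have "\<dots> \<approx> Gt e" using e by (intro rel_VG)
  finally have 1: "Gt e * EG b \<approx> (Gt e :: ('v,'e,'k) ser)" .
  have 2: "Gt e * Vt b \<approx> (Gt e :: ('v,'e,'k) ser)" using G_V[of b e] e by auto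
  have "Gt e * Q b = Gt e * Vt b - (Gt e :: ('v,'e,'k) ser) * EG b" by (simp add: Q_def right_diff_distrib)
  also have "\<dots> \<approx> Gt e - Gt e" using 2 1 by (rule eqv_diff)
  finally show ?thesis by simp
qed

lemma Q_EG: assumes b: "b \<in> Reg E0 E1 s" shows "Q b * (EG b :: ('v,'e,'k::field) ser) \<approx> 0"
proof -
  have "Q b * EG b = (\<Sum>f\<in>Sv b. (Q b * Et f) * (Gt f :: ('v,'e,'k) ser))"
    by (simp add: EG_Sv sum_distrib_left mult.assoc)
  also have "\<dots> \<approx> (\<Sum>f\<in>Sv b. 0 * (Gt f :: ('v,'e,'k) ser))"
    using b by (intro eqv_sum eqv_rmul) (auto simp: Sv_def intro: Q_E)
  finally show ?thesis by simp
qed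

lemma V_EG: assumes b: "b \<in> E0" shows "Vt b * (EG b :: ('v,'e,'k::field) ser) \<approx> EG b"
proof -
  have "Vt b * EG b = (\<Sum>f\<in>Sv b. (Vt b * Et f) * (Gt f :: ('v,'e,'k) ser))"
    by (simp add: EG_Sv sum_distrib_left mult.assoc)
  also have "\<dots> \<approx> (\<Sum>f\<in>Sv b. Et f * (Gt f :: ('v,'e,'k) ser))"
    using b rel_VE by (intro eqv_sum eqv_rmul) (auto simp: Sv_def)
  finally show ?thesis by (simp add: EG_Sv)
qed

lemma EG_V: assumes b: "b \<in> E0" shows "(EG b :: ('v,'e,'k::field) ser) * Vt b \<approx> EG b"
proof -
  have "EG b * Vt b = (\<Sum>f\<in>Sv b. Et f * (Gt f * (Vt b :: ('v,'e,'k) ser)))"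
    by (simp add: EG_Sv sum_distrib_right mult.assoc)
  also have "\<dots> \<approx> (\<Sum>f\<in>Sv b. Et f * (Gt f :: ('v,'e,'k) ser))"
    using b rel_GV by (intro eqv_sum eqv_lmul) (auto simp: Sv_def)
  finally show ?thesis by (simp add: EG_Sv)
qed

lemma V_Q: "b \<in> E0 \<Longrightarrow> Vt b * Q b \<approx> (Q b :: ('v,'e,'k::field) ser)"
  unfolding Q_def right_diff_distrib using rel_VV[of b b] V_EG[of b] by (auto intro: eqv_diff)

lemma Q_V: "b \<in> E0 \<Longrightarrow> Q b * Vt b \<approx> (Q b :: ('v,'e,'k::field) ser)"
  unfolding Q_def left_diff_distrib using rel_VV[of b b] EG_V[of b] by (auto intro: eqv_diff)

lemma Q_Q: assumes "b \<in> Reg E0 E1 s" shows "Q b * Q b \<approx> (Q b :: ('v,'e,'k::field) ser)"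
proof -
  have b: "b \<in> E0" using assms by (simp add: Reg_def)
  have "Q b * Q b = Q b * Vt b - Q b * (EG b :: ('v,'e,'k) ser)" by (simp add: Q_def right_diff_distrib)
  also have "\<dots> \<approx> Q b - 0" using Q_V[OF b] Q_EG[OF assms] by (rule eqv_diff)
  finally show ?thesis by simp
qed

lemma Q_PP: assumes "b \<in> Reg E0 E1 s" "pw w es" "es \<noteq> []" "src w es = b"
  shows "Q b * (PP w es :: ('v,'e,'k::field) ser) \<approx> 0"
proof -
  obtain e es' where es: "es = e # es'" using assms by (cases es) auto
  have "(Q b * Et e) * PP w es' \<approx> 0 * (PP w es' :: ('v,'e,'k) ser)"
    using assms es by (intro eqv_rmul Q_E) auto
  then show ?thesis using es by (simp add: mult.assoc)
qed

lemma GG_Q: assumes "b \<in> Reg E0 E1 s" "pw w es" "es \<noteq> []" "src w es = b"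
  shows "(GG w es :: ('v,'e,'k::field) ser) * Q b \<approx> 0"
proof -
  obtain e es' where es: "es = e # es'" using assms by (cases es) auto
  have "GG w es' * (Gt e * Q b) \<approx> (GG w es' :: ('v,'e,'k) ser) * 0"
    using assms es by (intro eqv_lmul G_Q) auto
  then show ?thesis using es by (simp add: mult.assoc)
qed

end

context cg
begin

fun mon :: "'v \<times> 'e list \<times> 'e list \<Rightarrow> ('v,'e,'k::field) ser" where
  "mon (w, g, n) = PP w g * GG w n"

fun vt :: "'v \<times> 'e list \<times> 'e list \<Rightarrow> bool" where
  "vt (w, g, n) \<longleftrightarrow> pw w g \<and> pw w n"

lemma A_mon[intro, simp]: "vt t \<Longrightarrow> A (mon t)" by (cases t) auto


definition Gen :: "('v,'e) cgen \<Rightarrow> ('v,'e,'k::field) ser" where "Gen x = Ser (gen x)"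

lemma A_Gen: "x \<in> gens E0 E1 \<Longrightarrow> A (Gen x)"
  by (simp add: A_def Gen_def FA_gen)

lemma V_mon: assumes "vt (w, g, n)" "u \<in> E0"
  shows "Vt u * (mon (w, g, n) :: ('v,'e,'k::field) ser) \<approx> (if u = src w g then mon (w, g, n) else 0)"
proof -
  have "(Vt u * PP w g) * GG w n \<approx> (if u = src w g then PP w g else 0) * (GG w n :: ('v,'e,'k) ser)"
    using assms by (intro eqv_rmul V_PP) auto
  then show ?thesis by (cases "u = src w g") (simp_all add: mult.assoc)
qed

lemma E_mon: assumes "vt (w, g, n)" "e \<in> E1"
  shows "Et e * (mon (w, g, n) :: ('v,'e,'k::field) ser) \<approx> (if r e = src w g then mon (w, e # g, n) else 0)
    \<and> (r e = src w g \<longrightarrow> vt (w, e # g, n))"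
proof (cases "r e = src w g")
  case True then show ?thesis using assms by (simp add: mult.assoc)
next
  case False
  have "Et e * (PP w g * GG w n) \<approx> (Et e * Vt (r e)) * (PP w g * (GG w n :: ('v,'e,'k) ser))"
    using assms by (intro eqv_rmul eqv_sym[OF rel_EV]) auto
  also have "\<dots> = Et e * ((Vt (r e) * PP w g) * GG w n)" by (simp add: mult.assoc)
  also have "\<dots> \<approx> Et e * ((if r e = src w g then PP w g else 0) * (GG w n :: ('v,'e,'k) ser))"
    using assms by (intro eqv_lmul eqv_rmul V_PP) auto
  finally show ?thesis using False by simp
qed

lemma G_mon_Cons: assumes "vt (w, f # g, n)" "e \<in> E1"
  shows "Gt e * (mon (w, f # g, n) :: ('v,'e,'k::field) ser) \<approx> (if e = f then mon (w, g, n) else 0)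
    \<and> vt (w, g, n)"
proof -
  have "(Gt e * Et f) * (PP w g * GG w n) \<approx> (if e = f then Vt (r e) else 0) * (PP w g * (GG w n :: ('v,'e,'k) ser))"
    using assms by (intro eqv_rmul G_E_if) auto
  moreover have "Vt (r f) * (PP w g * GG w n) \<approx> PP w g * (GG w n :: ('v,'e,'k) ser)"
  proof -
    have "(Vt (r f) * PP w g) * GG w n \<approx> (if r f = src w g then PP w g else 0) * (GG w n :: ('v,'e,'k) ser)"
      using assms by (intro eqv_rmul V_PP) (auto dest: pw_src)
    then show ?thesis using assms by (simp add: mult.assoc)
  qed
  ultimately show ?thesis using assms by (cases "e = f") (auto simp: mult.assoc intro: eqv_trans)
qed

lemma G_mon_Nil: assumes "vt (w, [], n)" "e \<in> E1"
  shows "Gt e * (mon (w, [], n) :: ('v,'e,'k::field) ser) \<approx> (if s e = w then mon (r e, [], n @ [e]) else 0)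
    \<and> (s e = w \<longrightarrow> vt (r e, [], n @ [e]))"
proof -
  have w: "w \<in> E0" using assms by auto
  have 1: "(Gt e * Vt w) * GG w n \<approx> (if w = s e then Gt e else 0) * (GG w n :: ('v,'e,'k) ser)"
    using assms by (intro eqv_rmul G_V) auto
  show ?thesis
  proof (cases "s e = w")
    case False then show ?thesis using 1 by (simp add: mult.assoc)
  next
    case True
    have 2: "Gt e * (GG w n :: ('v,'e,'k) ser) \<approx> GG (r e) (n @ [e]) \<and> pw (r e) (n @ [e])"
      using assms True by (intro GG_snoc) auto
    have 3: "Vt (r e) * (GG (r e) (n @ [e]) :: ('v,'e,'k) ser) \<approx> GG (r e) (n @ [e])"
      using V_GG[of "r e" "n @ [e]" "r e"] 2 assms by auto
    show ?thesis using 1 2 3 True assms by (auto simp: mult.assoc intro: eqv_trans eqv_sym)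
  qed
qed

declare mon.simps[simp del]
lemma mon_def: "mon (w, g, n) = PP w g * GG w n" by (rule mon.simps)

lemma ifmon: "y \<approx> (if P then mon t' else 0) \<Longrightarrow> (P \<longrightarrow> vt t') \<Longrightarrow> vt t \<Longrightarrow>
   \<exists>c t''. vt t'' \<and> (y :: ('v,'e,'k::field) ser) \<approx> sc c (mon t'')"
proof (cases P)
  case True
  assume "y \<approx> (if P then mon t' else 0)" "P \<longrightarrow> vt t'"
  then show ?thesis using True by (intro exI[of _ 1] exI[of _ t']) simp
next
  case False
  assume "y \<approx> (if P then mon t' else 0)" "vt t"
  then show ?thesis using False by (intro exI[of _ 0] exI[of _ t]) simp
qed

lemma gen_mon: assumes "x \<in> gens E0 E1" "vt t"
  shows "\<exists>c t'. vt t' \<and> Gen x * (mon t :: ('v,'e,'k::field) ser) \<approx> sc c (mon t')"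
proof -
  obtain w g n where t: "t = (w, g, n)" by (cases t) auto
  from assms(1) consider (V) v where "x = Vx v" "v \<in> E0" | (E) e where "x = Ed e" "e \<in> E1"
    | (G) e where "x = Gh e" "e \<in> E1" by (auto simp: gens_def)
  then show ?thesis
  proof cases
    case V
    then have "Gen x * mon (w, g, n) \<approx> (if v = src w g then mon (w, g, n) else (0::('v,'e,'k) ser))"
      using V_mon[of w g n v] assms t V by (simp add: Gen_def Vt_def split del: if_split)
    then show ?thesis using assms t by (intro ifmon[where P="v = src w g" and t=t and t'="(w, g, n)"]) (simp_all split del: if_split)
  next
    case E
    then have "Gen x * mon (w, g, n) \<approx> (if r e = src w g then mon (w, e # g, n) else (0::('v,'e,'k) ser))
      \<and> (r e = src w g \<longrightarrow> vt (w, e # g, n))"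
      using E_mon[of w g n e] assms t E by (simp add: Gen_def Et_def split del: if_split)
    then show ?thesis using assms t by (intro ifmon[where P="r e = src w g" and t=t and t'="(w, e # g, n)"]) (simp_all split del: if_split)
  next
    case G
    show ?thesis
    proof (cases g)
      case Nil
      then have "Gen x * mon (w, g, n) \<approx> (if s e = w then mon (r e, [], n @ [e]) else (0::('v,'e,'k) ser))
        \<and> (s e = w \<longrightarrow> vt (r e, [], n @ [e]))"
        using G_mon_Nil[of w n e] assms t G Nil by (simp add: Gen_def Gt_def split del: if_split)
      then show ?thesis using assms t by (intro ifmon[where P="s e = w" and t=t and t'="(r e, [], n @ [e])"]) (simp_all split del: if_split)
    next
      case (Cons f g')
      then have "Gen x * mon (w, g, n) \<approx> (if e = f then mon (w, g', n) else (0::('v,'e,'k) ser))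
        \<and> vt (w, g', n)"
        using G_mon_Cons[of w f g' n e] assms t G Cons by (simp add: Gen_def Gt_def split del: if_split)
      then show ?thesis using assms t by (intro ifmon[where P="e = f" and t=t and t'="(w, g', n)"]) (simp_all split del: if_split)
    qed
  qed
qed

lemma gen_base: assumes "x \<in> gens E0 E1" shows "\<exists>t. vt t \<and> Gen x \<approx> (mon t :: ('v,'e,'k::field) ser)"
proof -
  from assms consider (V) v where "x = Vx v" "v \<in> E0" | (E) e where "x = Ed e" "e \<in> E1"
    | (G) e where "x = Gh e" "e \<in> E1" by (auto simp: gens_def)
  then show ?thesis
  proof cases
    case V
    have "mon (v, [], []) \<approx> (Vt v :: ('v,'e,'k) ser)" using rel_VV[of v v] V by (simp add: mon_def)
    then show ?thesis using V by (intro exI[of _ "(v, [], [])"]) (auto simp: Gen_def Vt_def intro: eqv_sym)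
  next
    case E
    have "(Et e * Vt (r e)) * Vt (r e) \<approx> Et e * (Vt (r e) :: ('v,'e,'k) ser)"
      using E rel_EV by (intro eqv_rmul) auto
    also have "\<dots> \<approx> Et e" using E rel_EV by auto
    finally have "mon (r e, [e], []) \<approx> (Et e :: ('v,'e,'k) ser)" by (simp add: mon_def)
    then show ?thesis using E by (intro exI[of _ "(r e, [e], [])"]) (auto simp: Gen_def Et_def intro: eqv_sym)
  next
    case G
    have "Vt (r e) * (Vt (r e) * Gt e) \<approx> Vt (r e) * (Gt e :: ('v,'e,'k) ser)"
      using G rel_VG by (intro eqv_lmul) auto
    also have "\<dots> \<approx> Gt e" using G rel_VG by auto
    finally have "mon (r e, [], [e]) \<approx> (Gt e :: ('v,'e,'k) ser)" by (simp add: mon_def)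
    then show ?thesis using G by (intro exI[of _ "(r e, [], [e])"]) (auto simp: Gen_def Gt_def intro: eqv_sym)
  qed
qed

definition lc :: "('k::field \<times> 'v \<times> 'e list \<times> 'e list) list \<Rightarrow> ('v,'e,'k) ser" where
  "lc L = sum_list (map (\<lambda>(c, t). sc c (mon t)) L)"

lemma lc_simps[simp]: "lc [] = 0" "lc ((c, t) # L) = sc c (mon t) + lc L" "lc (L1 @ L2) = lc L1 + lc L2"
  by (simp_all add: lc_def)

lemma sc_lc: "sc k (lc L) = lc (map (\<lambda>(c, t). (k * c, t)) L)"
  by (induction L) auto

lemma mult_lc: assumes "A z" "\<And>t. vt t \<Longrightarrow> \<exists>c t'. vt t' \<and> z * mon t \<approx> sc c (mon t')"
  "\<forall>p\<in>set L. vt (snd p)"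
  shows "\<exists>L'. (\<forall>p\<in>set L'. vt (snd p)) \<and> z * lc L \<approx> lc L'"
  using assms(3)
proof (induction L)
  case Nil then show ?case by (intro exI[of _ "[]"]) auto
next
  case (Cons p L)
  obtain c t where p: "p = (c, t)" by (cases p) auto
  obtain L' where L': "\<forall>p\<in>set L'. vt (snd p)" "z * lc L \<approx> lc L'" using Cons by auto
  obtain c' t' where t': "vt t'" "z * mon t \<approx> sc c' (mon t')" using assms(2)[of t] Cons p by auto
  have "z * lc (p # L) = sc c (z * mon t) + z * lc L" using p by (simp add: distrib_left)
  also have "\<dots> \<approx> sc c (sc c' (mon t')) + lc L'" using t' L' by (intro eqv_add eqv_sc)
  also have "\<dots> = lc ((c * c', t') # L')" by simp
  finally show ?case using t' L' by (intro exI[of _ "(c * c', t') # L'"]) auto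
qed

definition wd :: "('v,'e) cgen list \<Rightarrow> ('v,'e,'k::field) ser" where
  "wd w = Ser (\<lambda>u. if u = w then 1 else 0)"

lemma wd_Nil: "wd [] = 1" by (simp add: wd_def one_ser_def fa_one_def)

lemma wd_Cons: "wd (a # as) = Gen a * wd as"
proof (rule ser_eqI, rule ext)
  fix u :: "('v,'e) cgen list"
  show "unS (wd (a # as)) u = unS (Gen a * wd as) u"
  proof (cases u)
    case Nil then show ?thesis by (simp add: wd_def Gen_def fa_mult_def gen_def)
  next
    case (Cons x xs)
    have "unS (Gen a * wd as) u = (\<Sum>i\<le>Suc (length xs). gen a (take i u) * (if drop i u = as then 1 else 0))"
      using Cons by (simp add: wd_def Gen_def fa_mult_def)
    also have "\<dots> = gen a (take 0 u) * (if drop 0 u = as then 1 else 0) +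
        (\<Sum>i\<le>length xs. gen a (take (Suc i) u) * (if drop (Suc i) u = as then 1 else 0))"
      by (rule sum.atMost_Suc_shift)
    also have "\<dots> = (\<Sum>i\<le>length xs. if i = 0 then (if x = a \<and> xs = as then 1 else 0) else 0)"
    proof -
      have g0: "gen a (take 0 u) * (if drop 0 u = as then 1 else 0) = 0" by (simp add: gen_def)
      have S: "(\<Sum>i\<le>length xs. gen a (take (Suc i) u) * (if drop (Suc i) u = as then 1 else 0)) = (\<Sum>i\<le>length xs. if i = 0 then (if x = a \<and> xs = as then 1 else 0) else 0)"
      proof (rule sum.cong[OF refl])
        fix i assume "i \<in> {..length xs}"
        then show "gen a (take (Suc i) u) * (if drop (Suc i) u = as then 1 else 0) = (if i = 0 then (if x = a \<and> xs = as then 1 else 0) else 0)"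
          using Cons by (cases xs) (auto simp: gen_def)
      qed
      show ?thesis by (simp only: g0 S add_0)
    qed
    also have "\<dots> = unS (wd (a # as)) u" using Cons by (simp add: wd_def)
    finally show ?thesis by (rule sym)
  qed
qed

lemma span_word: "w \<noteq> [] \<Longrightarrow> set w \<subseteq> gens E0 E1 \<Longrightarrow>
  \<exists>L. (\<forall>p\<in>set L. vt (snd p)) \<and> wd w \<approx> (lc L :: ('v,'e,'k::field) ser)"
proof (induction w)
  case Nil then show ?case by simp
next
  case (Cons a as)
  show ?case
  proof (cases "as = []")
    case True
    have "a \<in> gens E0 E1" using Cons.prems by simp
    then obtain t where t: "vt t" "Gen a \<approx> (mon t :: ('v,'e,'k) ser)" using gen_base by blast
    have "wd (a # as) = (Gen a :: ('v,'e,'k) ser)" using True by (simp add: wd_Cons wd_Nil)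
    then show ?thesis using t by (intro exI[of _ "[(1, t)]"]) auto
  next
    case False
    obtain L where L: "\<forall>p\<in>set L. vt (snd p)" "wd as \<approx> (lc L :: ('v,'e,'k) ser)" using Cons False by auto
    have Aa: "A (Gen a :: ('v,'e,'k) ser)" using Cons by (intro A_Gen) auto
    obtain L' where L': "\<forall>p\<in>set L'. vt (snd p)" "Gen a * lc L \<approx> (lc L' :: ('v,'e,'k) ser)"
    proof -
      have ain: "a \<in> gens E0 E1" using Cons.prems by simp
      have "\<exists>L'. (\<forall>p\<in>set L'. vt (snd p)) \<and> Gen a * lc L \<approx> (lc L' :: ('v,'e,'k) ser)"
        by (rule mult_lc[OF Aa _ L(1)]) (rule gen_mon[OF ain])
      then show ?thesis using that by blast
    qed
    have "wd (a # as) \<approx> Gen a * (lc L :: ('v,'e,'k) ser)" unfolding wd_Cons using Aa L by auto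
    then show ?thesis using L' by (blast intro: eqv_trans)
  qed
qed

lemma fun_sum_apply: "(sum f S) x = (\<Sum>a\<in>S. f a x)"
  by (induction S rule: infinite_finite_induct) auto

lemma Ser_decomp: assumes "f \<in> FA E0 E1"
  shows "Ser f = (\<Sum>w\<in>{w. f w \<noteq> 0}. sc (f w) (wd w :: ('v,'e,'k::field) ser))"
proof (rule ser_eqI, rule ext)
  fix u
  have fin: "finite {w. f w \<noteq> 0}" using assms by (simp add: FA_def)
  have "unS (\<Sum>w\<in>{w. f w \<noteq> 0}. sc (f w) (wd w :: ('v,'e,'k) ser)) u = (\<Sum>w\<in>{w. f w \<noteq> 0}. f w * (if u = w then 1 else 0))"
    by (simp add: unS_sum wd_def fa_smul_def fun_sum_apply)
  also have "\<dots> = (\<Sum>w\<in>{w. f w \<noteq> 0}. if u = w then f w else 0)" by (rule sum.cong) auto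
  also have "\<dots> = f u" using fin by (cases "f u = 0") (auto simp: sum.delta)
  finally show "unS (Ser f) u = unS (\<Sum>w\<in>{w. f w \<noteq> 0}. sc (f w) (wd w :: ('v,'e,'k) ser)) u" by simp
qed

lemma span_sum: "finite W \<Longrightarrow> (\<And>w. w \<in> W \<Longrightarrow> w \<noteq> [] \<and> set w \<subseteq> gens E0 E1) \<Longrightarrow>
  \<exists>L. (\<forall>p\<in>set L. vt (snd p)) \<and> (\<Sum>w\<in>W. sc (f w) (wd w)) \<approx> (lc L :: ('v,'e,'k::field) ser)"
proof (induction W rule: finite_induct)
  case empty then show ?case by (intro exI[of _ "[]"]) auto
next
  case (insert w W)
  obtain L where L: "\<forall>p\<in>set L. vt (snd p)" "(\<Sum>w\<in>W. sc (f w) (wd w)) \<approx> (lc L :: ('v,'e,'k) ser)"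
    using insert.IH insert.prems by blast
  have ww: "w \<noteq> []" "set w \<subseteq> gens E0 E1" using insert.prems by auto
  obtain L1 where L1: "\<forall>p\<in>set L1. vt (snd p)" "wd w \<approx> (lc L1 :: ('v,'e,'k) ser)"
    using span_word[OF ww] by blast
  have "(\<Sum>w\<in>insert w W. sc (f w) (wd w)) = sc (f w) (wd w) + (\<Sum>w\<in>W. sc (f w) (wd w :: ('v,'e,'k) ser))"
    using insert by simp
  also have "\<dots> \<approx> sc (f w) (lc L1) + lc L"
    using L(2) L1(2) by (intro eqv_add eqv_sc)
  also have "\<dots> = lc (map (\<lambda>(c, t). (f w * c, t)) L1) + lc L" by (simp only: sc_lc)
  also have "\<dots> = lc (map (\<lambda>(c, t). (f w * c, t)) L1 @ L)" by simp
  finally have "(\<Sum>w\<in>insert w W. sc (f w) (wd w)) \<approx> (lc (map (\<lambda>(c, t). (f w * c, t)) L1 @ L) :: ('v,'e,'k) ser)" .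
  moreover have "\<forall>p\<in>set (map (\<lambda>(c, t). (f w * c, t)) L1 @ L). vt (snd p)" using L(1) L1(1) by auto
  ultimately show ?case by blast
qed

lemma span_A: assumes "A (x :: ('v,'e,'k::field) ser)" shows "\<exists>L. (\<forall>p\<in>set L. vt (snd p)) \<and> x \<approx> lc L"
proof -
  have f: "unS x \<in> FA E0 E1" using assms by (simp add: A_def)
  have "x = Ser (unS x)" by simp
  also have "\<dots> = (\<Sum>w\<in>{w. unS x w \<noteq> 0}. sc (unS x w) (wd w))" by (rule Ser_decomp[OF f])
  finally have x: "x = (\<Sum>w\<in>{w. unS x w \<noteq> 0}. sc (unS x w) (wd w))" .
  have "\<exists>L. (\<forall>p\<in>set L. vt (snd p)) \<and> (\<Sum>w\<in>{w. unS x w \<noteq> 0}. sc (unS x w) (wd w)) \<approx> (lc L :: ('v,'e,'k) ser)"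
    using f by (intro span_sum) (auto simp: FA_def)
  then show ?thesis using x by metis
qed

definition cf :: "('k::field \<times> 'v \<times> 'e list \<times> 'e list) list \<Rightarrow> 'v \<times> 'e list \<times> 'e list \<Rightarrow> 'k" where
  "cf L t = sum_list (map fst (filter (\<lambda>p. snd p = t) L))"

lemma lc_set: "lc L = (\<Sum>t\<in>set (map snd L). sc (cf L t) (mon t :: ('v,'e,'k::field) ser))"
proof (induction L)
  case Nil then show ?case by simp
next
  case (Cons p L)
  obtain c t where p: "p = (c, t)" by (cases p) auto
  have cf: "cf ((c, t) # L) u = (if u = t then c else 0) + cf L u" for u by (simp add: cf_def)
  have "(\<Sum>u\<in>set (map snd (p # L)). sc (cf (p # L) u) (mon u :: ('v,'e,'k) ser))
      = (\<Sum>u\<in>insert t (set (map snd L)). sc (if u = t then c else 0) (mon u)) + (\<Sum>u\<in>insert t (set (map snd L)). sc (cf L u) (mon u))"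
    unfolding p by (simp only: cf sc_add_left sum.distrib list.map set_simps snd_conv)
  also have "(\<Sum>u\<in>insert t (set (map snd L)). sc (if u = t then c else 0) (mon u :: ('v,'e,'k) ser)) = sc c (mon t)"
    by (simp add: if_distrib[of "\<lambda>k. sc k _"] sum.delta cong: if_cong)
  also have "(\<Sum>u\<in>insert t (set (map snd L)). sc (cf L u) (mon u :: ('v,'e,'k) ser)) = (\<Sum>u\<in>set (map snd L). sc (cf L u) (mon u))"
  proof (cases "t \<in> set (map snd L)")
    case True then show ?thesis by (simp add: insert_absorb)
  next
    case False
    then have "cf L t = 0" unfolding cf_def by (induction L) auto
    then show ?thesis using False by simp
  qed
  finally show ?case using Cons p by simp
qed

lemma span_set: assumes "A (x :: ('v,'e,'k::field) ser)"
  shows "\<exists>T c. finite T \<and> (\<forall>t\<in>T. vt t) \<and> x \<approx> (\<Sum>t\<in>T. sc (c t) (mon t))"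
proof -
  obtain L where L: "\<forall>p\<in>set L. vt (snd p)" "x \<approx> lc L" using span_A[OF assms] by auto
  from L(2) have "x \<approx> (\<Sum>t\<in>set (map snd L). sc (cf L t) (mon t))" by (simp only: lc_set)
  then show ?thesis using L(1) by (intro exI[of _ "set (map snd L)"] exI[of _ "cf L"]) auto
qed

end

locale kern = cg E0 E1 r s X
  for E0 :: "'v set" and E1 :: "'e set" and r s :: "'e \<Rightarrow> 'v" and X :: "'v set" +
  fixes Ik :: "('v,'e,'k::field) ser \<Rightarrow> bool"
  assumes I_A: "Ik x \<Longrightarrow> A x"
    and I_add: "Ik x \<Longrightarrow> Ik y \<Longrightarrow> Ik (x + y)"
    and I_lmul: "A z \<Longrightarrow> Ik x \<Longrightarrow> Ik (z * x)"
    and I_rmul: "A z \<Longrightarrow> Ik x \<Longrightarrow> Ik (x * z)"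
    and I_eqv: "Ik x \<Longrightarrow> x \<approx> y \<Longrightarrow> Ik y"
    and I_V: "u \<in> E0 \<Longrightarrow> u \<notin> Reg E0 E1 s - X \<Longrightarrow> \<not> Ik (Vt u)"
    and I_Q: "u \<in> Reg E0 E1 s - X \<Longrightarrow> \<not> Ik (Q u)"
    and condL: "rel_condL E0 E1 r s X"
begin

lemma RegE0: "u \<in> Reg E0 E1 s \<Longrightarrow> u \<in> E0" by (simp add: Reg_def)

lemma I_sc_Q: assumes "k \<noteq> 0" "u \<in> Reg E0 E1 s - X" "Ik (sc k (Q u))" shows False
proof -
  have u: "u \<in> Reg E0 E1 s" using assms by auto
  have "Ik (sc (1 / k) (Q u) * sc k (Q u))" using assms RegE0[OF u] by (intro I_lmul) auto
  moreover have "sc (1 / k) (Q u) * sc k (Q u) = Q u * Q u" using assms by simp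
  ultimately have "Ik (Q u * Q u)" by simp
  then have "Ik (Q u)" using Q_Q[OF u] by (rule I_eqv)
  then show False using I_Q assms by blast
qed

lemma I_sc_V: assumes "k \<noteq> 0" "u \<in> E0" "Ik (sc k (Vt u))" shows False
proof (cases "u \<in> Reg E0 E1 s - X")
  case True
  have "Ik (Q u * sc k (Vt u))" using assms by (intro I_lmul) auto
  then have "Ik (sc k (Q u * Vt u))" by simp
  moreover have "sc k (Q u * Vt u) \<approx> sc k (Q u)" using Q_V[OF assms(2)] by (rule eqv_sc)
  ultimately have "Ik (sc k (Q u))" by (rule I_eqv)
  then show False using I_sc_Q assms True by blast
next
  case False
  have "Ik (sc (1 / k) (Vt u) * sc k (Vt u))" using assms by (intro I_lmul) auto
  moreover have "sc (1 / k) (Vt u) * sc k (Vt u) = Vt u * Vt u" using assms by simp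
  ultimately have "Ik (Vt u * Vt u)" by simp
  then have "Ik (Vt u)" using rel_VV[OF assms(2) assms(2)] by (auto intro: I_eqv)
  then show False using I_V assms False by blast
qed

fun ch :: "'e list \<Rightarrow> bool" where
  "ch [] = True"
| "ch [e] = True"
| "ch (e # f # es) \<longleftrightarrow> r e = s f \<and> ch (f # es)"

lemma ch_Cons: "ch (e # es) \<longleftrightarrow> ch es \<and> (es \<noteq> [] \<longrightarrow> r e = s (hd es))"
  by (cases es) auto

lemma ch_append: "ch (xs @ ys) \<longleftrightarrow> ch xs \<and> ch ys \<and> (xs \<noteq> [] \<longrightarrow> ys \<noteq> [] \<longrightarrow> r (last xs) = s (hd ys))"
proof (induction xs)
  case Nil then show ?case by simp
next
  case (Cons x xs) then show ?case by (cases xs) (auto simp: ch_Cons)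
qed

lemma pw_iff: "pw w es \<longleftrightarrow> w \<in> E0 \<and> set es \<subseteq> E1 \<and> ch es \<and> (es \<noteq> [] \<longrightarrow> r (last es) = w)"
proof (induction es)
  case Nil then show ?case by simp
next
  case (Cons e es) then show ?case by (cases es) auto
qed

lemma ch_nth: "ch es \<Longrightarrow> Suc i < length es \<Longrightarrow> r (es ! i) = s (es ! Suc i)"
proof (induction es arbitrary: i rule: ch.induct)
  case (3 e f es) then show ?case by (cases i) auto
qed auto

definition ud :: "'v \<Rightarrow> bool" where "ud v \<longleftrightarrow> v \<in> X \<and> (\<exists>f. Sv v = {f})"

lemma ud_unique: "ud v \<Longrightarrow> e \<in> E1 \<Longrightarrow> e' \<in> E1 \<Longrightarrow> s e = v \<Longrightarrow> s e' = v \<Longrightarrow> e = e'"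
  unfolding ud_def Sv_def by (metis (mono_tags, lifting) mem_Collect_eq singletonD)

lemma no_ud_cycle: "pw w d \<Longrightarrow> d \<noteq> [] \<Longrightarrow> src w d = w \<Longrightarrow> \<forall>e\<in>set d. ud (s e) \<Longrightarrow> False"
proof (induction "length d" arbitrary: d rule: less_induct)
  case less
  have pw: "w \<in> E0" "set d \<subseteq> E1" "ch d" "r (last d) = w" using less.prems by (auto simp: pw_iff)
  have hd: "s (hd d) = w" using less.prems by (cases d) auto
  show False
  proof (cases "distinct d")
    case True
    have injs: "inj_on s (set d)"
      using pw less.prems(4) by (auto simp: inj_on_def intro: ud_unique)
    then have dm: "distinct (map s d)" using True by (simp add: distinct_map)
    have cyc: "is_cycle E1 r s d"
      unfolding is_cycle_def
    proof (intro conjI allI impI)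
      show "d \<noteq> []" "set d \<subseteq> E1" using less.prems pw by auto
      show "r (d ! i) = s (d ! Suc i)" if "Suc i < length d" for i using ch_nth[OF pw(3) that] .
      show "r (last d) = s (hd d)" using pw hd by simp
      show "inj_on (\<lambda>i. s (d ! i)) {..<length d}"
        using dm by (auto simp: inj_on_def distinct_conv_nth)
    qed
    have "\<forall>i<length d. s (d ! i) \<notin> Reg E0 E1 s - X"
      using less.prems(4) by (auto simp: ud_def)
    then have "has_exit E1 s d" using condL cyc unfolding rel_condL_def by blast
    then obtain e i where e: "e \<in> E1" "i < length d" "s e = s (d ! i)" "e \<noteq> d ! i"
      unfolding has_exit_def by blast
    have di: "d ! i \<in> set d" using e by auto
    then have "d ! i \<in> E1" "ud (s (d ! i))" using less.prems(4) pw(2) by auto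
    then have "e = d ! i" using e ud_unique[of "s (d ! i)" e "d ! i"] by auto
    then show False using e by simp
  next
    case False
    then obtain xs y ys zs where d: "d = xs @ [y] @ ys @ [y] @ zs" using not_distinct_decomp by blast
    define d' where "d' = xs @ [y] @ zs"
    have len: "length d' < length d" using d d'_def by simp
    have ch': "ch d'" using pw(3) unfolding d d'_def by (auto simp: ch_append ch_Cons)
    have last': "r (last d') = w" using pw(4) unfolding d d'_def by (cases zs) auto
    have pw': "pw w d'" using pw ch' last' d unfolding d'_def by (auto simp: pw_iff)
    have src': "src w d' = w" using hd d unfolding d'_def by (cases xs) auto
    show False using less.hyps[OF len pw'] src' less.prems(4) d unfolding d'_def by auto
  qed
qed

end

context kern
begin

definition rot :: "'e list \<Rightarrow> 'e list" where "rot d = tl d @ [hd d]"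
definition unrot :: "'e list \<Rightarrow> 'e list" where "unrot d = last d # butlast d"

lemma unrot_rot: "d \<noteq> [] \<Longrightarrow> unrot (rot d) = d"
  by (cases d) (auto simp: rot_def unrot_def)

lemma inj_rot: "(\<forall>d\<in>S. d \<noteq> []) \<Longrightarrow> inj_on rot S"
  by (metis inj_onI unrot_rot)

definition cfg :: "'v \<Rightarrow> 'k \<Rightarrow> 'e list set \<Rightarrow> ('e list \<Rightarrow> 'k) \<Rightarrow> bool" where
  "cfg w k S c \<longleftrightarrow> finite S \<and> w \<in> E0 \<and> k \<noteq> 0 \<and> (\<forall>d\<in>S. d \<noteq> [] \<and> pw w d \<and> src w d = w)
     \<and> Ik (sc k (Vt w) + (\<Sum>d\<in>S. sc (c d) (PP w d)))"

lemma rot_term: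
  assumes "d \<noteq> []" "pw w d" "src w d = w" "f \<in> E1" "s f = w"
  shows "Gt f * PP w d * Et f \<approx> (if hd d = f then PP (r f) (rot d) else (0 :: ('v,'e,'k) ser))
    \<and> (hd d = f \<longrightarrow> rot d \<noteq> [] \<and> pw (r f) (rot d) \<and> src (r f) (rot d) = r f)"
proof -
  obtain e d' where d: "d = e # d'" using assms by (cases d) auto
  have e: "e \<in> E1" "r e = src w d'" "pw w d'" using assms d by auto
  have snoc: "PP w d' * Et f \<approx> (PP (r f) (d' @ [f]) :: ('v,'e,'k) ser)" "pw (r f) (d' @ [f])"
    using PP_snoc[of w d' f] e assms by auto
  have "Gt f * PP w d * Et f = (Gt f * Et e) * (PP w d' * (Et f :: ('v,'e,'k) ser))"
    using d by (simp add: mult.assoc)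
  also have "\<dots> \<approx> (if f = e then Vt (r f) else 0) * (PP w d' * (Et f :: ('v,'e,'k) ser))"
    using assms e G_E_if[of f e] by (intro eqv_rmul) auto
  finally have 1: "Gt f * PP w d * Et f \<approx> (if f = e then Vt (r f) else 0) * (PP w d' * (Et f :: ('v,'e,'k) ser))" .
  show ?thesis
  proof (cases "f = e")
    case False then show ?thesis using 1 d by simp
  next
    case True
    have srcf: "src (r f) (d' @ [f]) = r f"
      using True e assms by (cases d') auto
    have "Vt (r f) * (PP w d' * Et f) \<approx> Vt (r f) * (PP (r f) (d' @ [f]) :: ('v,'e,'k) ser)"
      using snoc assms by (intro eqv_lmul) auto
    also have "\<dots> \<approx> PP (r f) (d' @ [f])"
      using V_PP[of "r f" "d' @ [f]" "r f"] snoc srcf assms by auto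
    finally show ?thesis using 1 True d snoc srcf by (auto simp: rot_def intro: eqv_trans)
  qed
qed

lemma ROT:
  assumes cfg: "cfg w k S c" and f: "f \<in> Sv w"
  shows "cfg (r f) k (rot ` {d\<in>S. hd d = f}) (c \<circ> unrot) \<and> card (rot ` {d\<in>S. hd d = f}) = card {d\<in>S. hd d = f}"
proof -
  define Sf where "Sf = {d\<in>S. hd d = f}"
  have fin: "finite S" and w: "w \<in> E0" and k: "k \<noteq> 0" and val: "\<forall>d\<in>S. d \<noteq> [] \<and> pw w d \<and> src w d = w"
    and I: "Ik (sc k (Vt w) + (\<Sum>d\<in>S. sc (c d) (PP w d)))" using cfg by (auto simp: cfg_def)
  have fE: "f \<in> E1" "s f = w" using f by (auto simp: Sv_def)
  have inj: "inj_on rot Sf" using val by (intro inj_rot) (auto simp: Sf_def)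
  have I2: "Ik (Gt f * (sc k (Vt w) + (\<Sum>d\<in>S. sc (c d) (PP w d))) * Et f)"
    using I fE by (intro I_rmul I_lmul) auto
  have "Gt f * (sc k (Vt w) + (\<Sum>d\<in>S. sc (c d) (PP w d))) * Et f
      = sc k (Gt f * Vt w * Et f) + (\<Sum>d\<in>S. sc (c d) (Gt f * PP w d * Et f))"
    by (simp add: distrib_left distrib_right sum_distrib_left sum_distrib_right mult.assoc)
  also have "\<dots> \<approx> sc k (Vt (r f)) + (\<Sum>d\<in>S. sc (c d) (if hd d = f then PP (r f) (rot d) else 0))"
  proof (intro eqv_add eqv_sc eqv_sum)
    have "Gt f * Vt w * Et f \<approx> Gt f * (Et f :: ('v,'e,'k) ser)"
      using G_V[of w f] fE w by (intro eqv_rmul) auto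
    also have "\<dots> \<approx> Vt (r f)" using GE_same fE by auto
    finally show "Gt f * Vt w * Et f \<approx> (Vt (r f) :: ('v,'e,'k) ser)" .
    show "Gt f * PP w d * Et f \<approx> (if hd d = f then PP (r f) (rot d) else (0 :: ('v,'e,'k) ser))" if "d \<in> S" for d
      using rot_term[of d w f] val that fE by auto
  qed
  also have "(\<Sum>d\<in>S. sc (c d) (if hd d = f then PP (r f) (rot d) else 0)) = (\<Sum>d\<in>Sf. sc (c d) (PP (r f) (rot d) :: ('v,'e,'k) ser))"
    unfolding Sf_def using fin by (simp add: if_distrib[of "sc _"] sum.inter_filter[symmetric] cong: if_cong)
  also have "\<dots> = (\<Sum>d'\<in>rot ` Sf. sc ((c \<circ> unrot) d') (PP (r f) d'))"
    using inj val by (simp add: sum.reindex Sf_def unrot_rot)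
  finally have "Gt f * (sc k (Vt w) + (\<Sum>d\<in>S. sc (c d) (PP w d))) * Et f \<approx> sc k (Vt (r f)) + (\<Sum>d'\<in>rot ` Sf. sc ((c \<circ> unrot) d') (PP (r f) d'))" .
  then have "Ik (sc k (Vt (r f)) + (\<Sum>d'\<in>rot ` Sf. sc ((c \<circ> unrot) d') (PP (r f) d')))"
    using I2 by (rule I_eqv[rotated])
  moreover have "\<forall>d\<in>rot ` Sf. d \<noteq> [] \<and> pw (r f) d \<and> src (r f) d = r f"
    using rot_term val fE by (auto simp: Sf_def)
  ultimately show ?thesis using fin fE k inj unfolding cfg_def Sf_def by (auto simp: card_image)
qed

definition nu :: "'e list \<Rightarrow> nat" where "nu d = length (takeWhile (\<lambda>e. ud (s e)) d)"

lemma cfg_empty: "cfg w k {} c \<Longrightarrow> False"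
  unfolding cfg_def using I_sc_V by auto

lemma step:
  assumes cfg: "cfg w k S c" and d: "d \<in> S"
  shows "(\<exists>w' S' c'. cfg w' k S' c' \<and> card S' < card S) \<or>
         (\<exists>w' S' c' d'. cfg w' k S' c' \<and> card S' = card S \<and> d' \<in> S' \<and> nu d = Suc (nu d'))"
proof -
  have fin: "finite S" and w: "w \<in> E0" and k: "k \<noteq> 0" and val: "\<forall>d\<in>S. d \<noteq> [] \<and> pw w d \<and> src w d = w"
    and I: "Ik (sc k (Vt w) + (\<Sum>d\<in>S. sc (c d) (PP w d)))" using cfg by (auto simp: cfg_def)
  obtain e d' where dd: "d = e # d'" using val d by (cases d) auto
  have e: "e \<in> E1" "s e = w" using val d dd by auto
  have hdS: "hd x \<in> Sv w" if xS: "x \<in> S" for x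
  proof -
    obtain y ys where "x = y # ys" using val xS by (cases x) auto
    then show ?thesis using val xS by (auto simp: Sv_def)
  qed
  have eS: "e \<in> Sv w" using hdS[OF d] dd by simp
  show ?thesis
  proof (cases "\<forall>x\<in>set d. ud (s x)")
    case True
    then have False using no_ud_cycle[of w d] val d by auto
    then show ?thesis ..
  next
    case notall: False
    show ?thesis
    proof (cases "ud w")
      case True
      then obtain f where Sf: "Sv w = {f}" by (auto simp: ud_def)
      then have ef: "e = f" using eS by auto
      have all: "{x\<in>S. hd x = f} = S" using hdS Sf by auto
      have R: "cfg (r f) k (rot ` S) (c \<circ> unrot) \<and> card (rot ` S) = card S"
        using ROT[OF cfg, of f] Sf all by auto
      have "\<exists>x\<in>set d'. \<not> ud (s x)" using notall dd e True by auto
      then have tw: "takeWhile (\<lambda>x. ud (s x)) (d' @ [e]) = takeWhile (\<lambda>x. ud (s x)) d'"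
        by (meson takeWhile_append1)
      have "nu d = Suc (nu (rot d))"
        using dd e True tw by (simp add: nu_def rot_def)
      moreover have "rot d \<in> rot ` S" using d by auto
      ultimately show ?thesis using R by blast
    next
      case nud: False
      show ?thesis
      proof (cases "w \<in> Reg E0 E1 s - X")
        case True
        have "Ik (Q w * (sc k (Vt w) + (\<Sum>d\<in>S. sc (c d) (PP w d))))" using I w by (intro I_lmul) auto
        moreover have "Q w * (sc k (Vt w) + (\<Sum>d\<in>S. sc (c d) (PP w d))) = sc k (Q w * Vt w) + (\<Sum>d\<in>S. sc (c d) (Q w * PP w d))"
          by (simp add: distrib_left sum_distrib_left)
        moreover have "sc k (Q w * Vt w) + (\<Sum>d\<in>S. sc (c d) (Q w * PP w d)) \<approx> sc k (Q w) + (\<Sum>d\<in>S. sc (c d) (0 :: ('v,'e,'k) ser))"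
          using True val w Q_V[OF w] by (intro eqv_add eqv_sc eqv_sum Q_PP) auto
        ultimately have "Ik (sc k (Q w))" by (auto intro: I_eqv)
        then have False using I_sc_Q k True by blast
        then show ?thesis ..
      next
        case notY: False
        have "\<exists>f\<in>Sv w. card {x\<in>S. hd x = f} < card S"
        proof (cases "\<exists>f\<in>Sv w. f \<notin> hd ` S")
          case True
          then obtain f where f: "f \<in> Sv w" "f \<notin> hd ` S" by blast
          then have "{x\<in>S. hd x = f} = {}" by auto
          then have c0: "card {x\<in>S. hd x = f} = 0" by (simp only: card.empty)
          have "card S > 0" using d fin by (auto simp: card_gt_0_iff)
          then show ?thesis using f c0 by (intro bexI[of _ f]) simp_all
        next
          case False
          then have sub: "Sv w \<subseteq> hd ` S" by auto
          then have "finite (Sv w)" using fin finite_subset by blast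
          then have "w \<in> Reg E0 E1 s" using eS w unfolding Reg_def Sv_def by auto
          then have "w \<in> X" using notY by auto
          then have "\<not> (\<exists>f. Sv w = {f})" using nud by (auto simp: ud_def)
          then obtain f' where f': "f' \<in> Sv w" "f' \<noteq> e" using eS by blast
          then obtain x where x: "x \<in> S" "hd x = f'" using sub by auto
          have "{x\<in>S. hd x = e} \<subset> S" using x f' by auto
          then show ?thesis using fin eS by (intro bexI[of _ e] psubset_card_mono) auto
        qed
        then obtain f where f: "f \<in> Sv w" "card {x\<in>S. hd x = f} < card S" by blast
        have "cfg (r f) k (rot ` {d \<in> S. hd d = f}) (c \<circ> unrot) \<and> card (rot ` {d \<in> S. hd d = f}) < card S"
          using ROT[OF cfg f(1)] f(2) by simp
        then show ?thesis by blast
      qed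
    qed
  qed
qed

lemma RotL: "cfg w k S c \<Longrightarrow> False"
proof (induction "card S" arbitrary: w k S c rule: less_induct)
  case less
  show False
  proof (cases "S = {}")
    case True then show False using less.prems cfg_empty by auto
  next
    case False
    then obtain d where d: "d \<in> S" by auto
    have inner: "cfg w k S' c \<Longrightarrow> card S' = card S \<Longrightarrow> d \<in> S' \<Longrightarrow> nu d = j \<Longrightarrow> False" for j w k S' c d
    proof (induction j arbitrary: w k S' c d)
      case 0
      then show False using step[OF 0(1) 0(3)] less.hyps by auto
    next
      case (Suc j)
      from step[OF Suc(2) Suc(4)] show False
      proof
        assume "\<exists>w' S'' c'. cfg w' k S'' c' \<and> card S'' < card S'"
        then show False using less.hyps Suc(3) by auto
      next
        assume "\<exists>w' S'' c' d'. cfg w' k S'' c' \<and> card S'' = card S' \<and> d' \<in> S'' \<and> nu d = Suc (nu d')"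
        then obtain w' S'' c' d' where "cfg w' k S'' c'" "card S'' = card S'" "d' \<in> S''" "nu d = Suc (nu d')" by blast
        then show False using Suc.IH[of w' k S'' c' d'] Suc(3) Suc(5) by auto
      qed
    qed
    show False using inner[OF less.prems refl d refl] .
  qed
qed

end

lemma sum_merge: "finite I \<Longrightarrow> (\<Sum>i\<in>I. sc (c i) (F (g i))) = (\<Sum>x\<in>g ` I. sc (\<Sum>i\<in>{i\<in>I. g i = x}. c i) (F x))"
  by (simp add: sum.image_gen[of I _ g] sc_sum_left)

lemma sum_merge_zero: "finite I \<Longrightarrow> (\<forall>x\<in>g ` I. (\<Sum>i\<in>{i\<in>I. g i = x}. c i) = 0) \<Longrightarrow> (\<Sum>i\<in>I. sc (c i) (F (g i))) = 0"
  unfolding sum_merge by (rule sum.neutral) auto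

context kern
begin

lemma pw_drop: "pw w g \<Longrightarrow> pw w (drop n g)"
proof (induction g arbitrary: n)
  case (Cons e g) then show ?case by (cases n) auto
qed auto

lemma RL_core:
  assumes fin: "finite S" and val: "\<forall>g\<in>S. pw w g" and AT: "A T"
    and I: "Ik (\<Sum>g\<in>S. sc (c g) (PP w g * T))"
    and g0: "g0 \<in> S" "c g0 \<noteq> 0" and minl: "\<forall>g\<in>S. c g \<noteq> 0 \<longrightarrow> length g0 \<le> length g"
  shows "\<exists>S' c'. finite S' \<and> (\<forall>d\<in>S'. d \<noteq> [] \<and> pw w d \<and> src w d = w)
      \<and> Ik (sc (c g0) (Vt w * T) + (\<Sum>d\<in>S'. sc (c' d) (PP w d * T)))"
proof -
  define n where "n = length g0"
  define S2 where "S2 = {g\<in>S. c g \<noteq> 0 \<and> take n g = g0 \<and> src w (drop n g) = w}"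
  have w: "w \<in> E0" using val g0 pw_E0 by blast
  have I1: "Ik (GG w g0 * (\<Sum>g\<in>S. sc (c g) (PP w g * T)))" using I val g0 by (intro I_lmul) auto
  have "GG w g0 * (\<Sum>g\<in>S. sc (c g) (PP w g * T)) = (\<Sum>g\<in>S. sc (c g) ((GG w g0 * PP w g) * T))"
    by (simp add: sum_distrib_left mult.assoc)
  also have "\<dots> \<approx> (\<Sum>g\<in>S. sc (c g) ((if take n g = g0 \<and> src w (drop n g) = w then PP w (drop n g) else 0) * T))"
  proof (intro eqv_sum)
    fix g assume gS: "g \<in> S"
    show "sc (c g) ((GG w g0 * PP w g) * T) \<approx> sc (c g) ((if take n g = g0 \<and> src w (drop n g) = w then PP w (drop n g) else 0) * T)"
    proof (cases "c g = 0")
      case True then show ?thesis by simp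
    next
      case False
      then have "length g0 \<le> length g" using minl gS by auto
      then show ?thesis using GG_PP[of w g0 g] val g0 gS AT unfolding n_def by (intro eqv_sc eqv_rmul) auto
    qed
  qed
  also have "\<dots> = (\<Sum>g\<in>S2. sc (c g) (PP w (drop n g) * T))"
  proof -
    have "(\<Sum>g\<in>S. sc (c g) ((if take n g = g0 \<and> src w (drop n g) = w then PP w (drop n g) else 0) * T))
        = (\<Sum>g\<in>S. if c g \<noteq> 0 \<and> take n g = g0 \<and> src w (drop n g) = w then sc (c g) (PP w (drop n g) * T) else 0)"
      by (intro sum.cong) auto
    also have "\<dots> = (\<Sum>g\<in>S2. sc (c g) (PP w (drop n g) * T))"
      unfolding S2_def by (rule sum.inter_filter[OF fin, symmetric])
    finally show ?thesis .
  qed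
  also have "\<dots> = sc (c g0) (PP w (drop n g0) * T) + (\<Sum>g\<in>S2 - {g0}. sc (c g) (PP w (drop n g) * T))"
  proof -
    have "g0 \<in> S2" using g0 by (simp add: S2_def n_def)
    moreover have "finite S2" using fin by (simp add: S2_def)
    ultimately show ?thesis by (simp add: sum.remove)
  qed
  also have "\<dots> = sc (c g0) (Vt w * T) + (\<Sum>d\<in>drop n ` (S2 - {g0}). sc (c (g0 @ d)) (PP w d * T))"
  proof -
    have inj: "inj_on (drop n) (S2 - {g0})"
    proof (rule inj_onI)
      fix x y assume "x \<in> S2 - {g0}" "y \<in> S2 - {g0}" "drop n x = drop n y"
      then show "x = y" by (metis (mono_tags, lifting) Diff_iff S2_def append_take_drop_id mem_Collect_eq)
    qed
    have "(\<Sum>g\<in>S2 - {g0}. sc (c g) (PP w (drop n g) * T)) = (\<Sum>g\<in>S2 - {g0}. sc (c (g0 @ drop n g)) (PP w (drop n g) * T))"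
      by (intro sum.cong refl) (metis (mono_tags, lifting) DiffD1 S2_def append_take_drop_id mem_Collect_eq)
    also have "\<dots> = (\<Sum>d\<in>drop n ` (S2 - {g0}). sc (c (g0 @ d)) (PP w d * T))"
      using inj by (simp add: sum.reindex)
    finally show ?thesis by (simp add: n_def)
  qed
  finally have "GG w g0 * (\<Sum>g\<in>S. sc (c g) (PP w g * T)) \<approx> sc (c g0) (Vt w * T) + (\<Sum>d\<in>drop n ` (S2 - {g0}). sc (c (g0 @ d)) (PP w d * T))" .
  then have I2: "Ik (sc (c g0) (Vt w * T) + (\<Sum>d\<in>drop n ` (S2 - {g0}). sc (c (g0 @ d)) (PP w d * T)))"
    using I1 by (rule I_eqv[rotated])
  have val2: "\<forall>d\<in>drop n ` (S2 - {g0}). d \<noteq> [] \<and> pw w d \<and> src w d = w"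
  proof
    fix d assume "d \<in> drop n ` (S2 - {g0})"
    then obtain g where g: "g \<in> S2" "g \<noteq> g0" "d = drop n g" by auto
    have "take n g = g0" using g by (simp add: S2_def)
    then have "g = g0 @ d" using append_take_drop_id[of n g] g by simp
    then have "d \<noteq> []" using g by auto
    moreover have "pw w d" using g val pw_drop by (auto simp: S2_def)
    moreover have "src w d = w" using g by (auto simp: S2_def)
    ultimately show "d \<noteq> [] \<and> pw w d \<and> src w d = w" by blast
  qed
  have "finite S2" using fin by (simp add: S2_def)
  then have fin2: "finite (drop n ` (S2 - {g0}))" by blast
  show ?thesis
    apply (rule exI[of _ "drop n ` (S2 - {g0})"])
    apply (rule exI[of _ "\<lambda>d. c (g0 @ d)"])
    using fin2 val2 I2 by blast
qed

lemma min_len: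
  assumes "finite S" "g \<in> S" "c g \<noteq> 0"
  shows "\<exists>g0\<in>S. c g0 \<noteq> 0 \<and> (\<forall>g\<in>S. c g \<noteq> 0 \<longrightarrow> length g0 \<le> length g)"
proof -
  let ?M = "{g\<in>S. c g \<noteq> 0}"
  have fin: "finite (length ` ?M)" using assms by simp
  have ne: "length ` ?M \<noteq> {}" using assms by auto
  obtain g0 where g0: "g0 \<in> ?M" "length g0 = Min (length ` ?M)" using Min_in[OF fin ne] by auto
  have "\<forall>g\<in>S. c g \<noteq> 0 \<longrightarrow> length g0 \<le> length g" using g0 fin by auto
  then show ?thesis using g0 by auto
qed

lemma RLV:
  assumes fin: "finite S" and val: "\<forall>g\<in>S. pw w g"
    and I: "Ik (\<Sum>g\<in>S. sc (c g) (PP w g * Vt w))"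
  shows "\<forall>g\<in>S. c g = 0"
proof (rule ccontr)
  assume "\<not> ?thesis"
  then obtain g where "g \<in> S" "c g \<noteq> 0" by auto
  then obtain g0 where g0: "g0 \<in> S" "c g0 \<noteq> 0" "\<forall>g\<in>S. c g \<noteq> 0 \<longrightarrow> length g0 \<le> length g"
    using min_len fin by blast
  have w: "w \<in> E0" using val g0 pw_E0 by blast
  obtain S' c' where S': "finite S'" "\<forall>d\<in>S'. d \<noteq> [] \<and> pw w d \<and> src w d = w"
    "Ik (sc (c g0) (Vt w * Vt w) + (\<Sum>d\<in>S'. sc (c' d) (PP w d * Vt w)))"
    using RL_core[OF fin val _ I g0] w by auto
  have "sc (c g0) (Vt w * Vt w) + (\<Sum>d\<in>S'. sc (c' d) (PP w d * Vt w)) \<approx> sc (c g0) (Vt w) + (\<Sum>d\<in>S'. sc (c' d) (PP w d))"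
    using S'(2) w rel_VV[OF w w] PP_V[of w _ w] by (intro eqv_add eqv_sc eqv_sum) auto
  then have "Ik (sc (c g0) (Vt w) + (\<Sum>d\<in>S'. sc (c' d) (PP w d)))" using S'(3) by (rule I_eqv[rotated])
  then have "cfg w (c g0) S' c'" using S' w g0 unfolding cfg_def by auto
  then show False by (rule RotL)
qed

lemma RLQ:
  assumes fin: "finite S" and val: "\<forall>g\<in>S. pw w g" and wY: "w \<in> Reg E0 E1 s - X"
    and I: "Ik (\<Sum>g\<in>S. sc (c g) (PP w g * Q w))"
  shows "\<forall>g\<in>S. c g = 0"
proof (rule ccontr)
  assume "\<not> ?thesis"
  then obtain g where "g \<in> S" "c g \<noteq> 0" by auto
  then obtain g0 where g0: "g0 \<in> S" "c g0 \<noteq> 0" "\<forall>g\<in>S. c g \<noteq> 0 \<longrightarrow> length g0 \<le> length g"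
    using min_len fin by blast
  have w: "w \<in> E0" and wR: "w \<in> Reg E0 E1 s" using wY RegE0 by auto
  obtain S' c' where S': "finite S'" "\<forall>d\<in>S'. d \<noteq> [] \<and> pw w d \<and> src w d = w"
    "Ik (sc (c g0) (Vt w * Q w) + (\<Sum>d\<in>S'. sc (c' d) (PP w d * Q w)))"
    using RL_core[OF fin val _ I g0] w by auto
  have I3: "Ik (Q w * (sc (c g0) (Vt w * Q w) + (\<Sum>d\<in>S'. sc (c' d) (PP w d * Q w))))"
    using S' w by (intro I_lmul) auto
  have e1: "Q w * (sc (c g0) (Vt w * Q w) + (\<Sum>d\<in>S'. sc (c' d) (PP w d * Q w)))
     = sc (c g0) ((Q w * Vt w) * Q w) + (\<Sum>d\<in>S'. sc (c' d) ((Q w * PP w d) * Q w))"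
    by (simp add: distrib_left sum_distrib_left mult.assoc)
  have e2: "sc (c g0) ((Q w * Vt w) * Q w) + (\<Sum>d\<in>S'. sc (c' d) ((Q w * PP w d) * Q w))
      \<approx> sc (c g0) (Q w * Q w) + (\<Sum>d\<in>S'. sc (c' d) (0 * Q w))"
    using S'(2) w wR Q_V[OF w] by (intro eqv_add eqv_sc eqv_sum eqv_rmul Q_PP) auto
  have e3: "sc (c g0) (Q w * Q w) \<approx> sc (c g0) (Q w)" using Q_Q[OF wR] by (rule eqv_sc)
  have "Ik (sc (c g0) (Q w * Q w) + (\<Sum>d\<in>S'. sc (c' d) (0 * Q w)))" using I3 e2 unfolding e1 by (rule I_eqv)
  then have "Ik (sc (c g0) (Q w * Q w))" by simp
  then have "Ik (sc (c g0) (Q w))" using e3 by (rule I_eqv)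
  then show False using I_sc_Q g0 wY by blast
qed

end

context kern
begin

fun tw :: "'v \<times> 'e list \<times> 'e list \<Rightarrow> 'v" where "tw (w, g, n) = w"
fun tg :: "'v \<times> 'e list \<times> 'e list \<Rightarrow> 'e list" where "tg (w, g, n) = g"
fun tn :: "'v \<times> 'e list \<times> 'e list \<Rightarrow> 'e list" where "tn (w, g, n) = n"
definition srcn :: "'v \<times> 'e list \<times> 'e list \<Rightarrow> 'v" where "srcn t = src (tw t) (tn t)"

definition phe :: "'e \<Rightarrow> 'v \<times> 'e list \<times> 'e list \<Rightarrow> 'v \<times> 'e list \<times> 'e list" where
  "phe e t = (if tn t = [] then (r e, tg t @ [e], []) else (tw t, tg t, tl (tn t)))"

abbreviation monk :: "'v \<times> 'e list \<times> 'e list \<Rightarrow> ('v,'e,'k) ser" where "monk \<equiv> mon"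

lemma mon_V: assumes "vt t" "b \<in> E0"
  shows "mon t * Vt b \<approx> (if srcn t = b then mon t else (0 :: ('v,'e,'k) ser))"
proof -
  obtain w g n where t: "t = (w, g, n)" by (cases t) auto
  have "PP w g * (GG w n * Vt b) \<approx> PP w g * (if b = src w n then GG w n else (0 :: ('v,'e,'k) ser))"
    using assms t by (intro eqv_lmul GG_V) auto
  then show ?thesis using t by (cases "b = src w n") (auto simp: mon_def srcn_def mult.assoc)
qed

lemma mon_E: assumes "vt t" "srcn t = b" "e \<in> Sv b"
  shows "mon t * Et e \<approx> (if tn t = [] \<or> hd (tn t) = e then mon (phe e t) else (0 :: ('v,'e,'k) ser))
     \<and> ((tn t = [] \<or> hd (tn t) = e) \<longrightarrow> vt (phe e t) \<and> length (tn (phe e t)) \<le> length (tn t) - 1)"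
proof -
  obtain w g n where t: "t = (w, g, n)" by (cases t) auto
  have e: "e \<in> E1" "s e = b" using assms by (auto simp: Sv_def)
  show ?thesis
  proof (cases n)
    case Nil
    then have wb: "w = b" using assms t by (simp add: srcn_def)
    have pg: "pw b g" using assms t wb by auto
    have sn: "PP b g * Et e \<approx> (PP (r e) (g @ [e]) :: ('v,'e,'k) ser)" "pw (r e) (g @ [e])"
      using PP_snoc[of b g e] pg e by auto
    have "PP b g * Vt b * Et e = PP b g * (Vt b * (Et e :: ('v,'e,'k) ser))" by (simp add: mult.assoc)
    also have "\<dots> \<approx> PP b g * Et e" using V_E[of b e] e pg by (intro eqv_lmul) (auto dest: pw_E0)
    also have "\<dots> \<approx> PP (r e) (g @ [e])" by (rule sn(1))
    also have "\<dots> \<approx> PP (r e) (g @ [e]) * Vt (r e)" using PP_V[of "r e" "g @ [e]" "r e"] sn e by (auto intro: eqv_sym)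
    finally show ?thesis using t Nil wb sn e by (simp add: mon_def phe_def)
  next
    case (Cons x n')
    have v: "pw w g" "x \<in> E1" "r x = src w n'" "pw w n'" using assms t Cons by auto
    have xb: "s x = b" using assms t Cons by (simp add: srcn_def)
    have "PP w g * GG w n' * (Gt x * Et e) \<approx> PP w g * GG w n' * (if x = e then Vt (r x) else (0 :: ('v,'e,'k) ser))"
      using v e by (intro eqv_lmul G_E_if) auto
    moreover have "PP w g * (GG w n' * Vt (r x)) \<approx> PP w g * (GG w n' :: ('v,'e,'k) ser)"
      using v GG_V[of w n' "r x"] pw_src[of w n'] by (intro eqv_lmul) auto
    ultimately show ?thesis using t Cons v by (cases "x = e") (auto simp: mon_def phe_def mult.assoc intro: eqv_trans)
  qed
qed

lemma mon_Gt: "tn t \<noteq> [] \<Longrightarrow> mon (tw t, tg t, tl (tn t)) * Gt (hd (tn t)) = (mon t :: ('v,'e,'k) ser)"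
  by (cases t; cases "tn t") (auto simp: mon_def mult.assoc)

lemma XEsum: assumes "finite Jx" "\<forall>i\<in>Jx. vt (ph i) \<and> srcn (ph i) = b" "e \<in> Sv b"
  shows "(\<Sum>i\<in>Jx. sc (c i) (mon (ph i))) * Et e \<approx>
    (\<Sum>i\<in>{i\<in>Jx. tn (ph i) = [] \<or> hd (tn (ph i)) = e}. sc (c i) (mon (phe e (ph i)) :: ('v,'e,'k) ser))"
proof -
  have "(\<Sum>i\<in>Jx. sc (c i) (mon (ph i))) * Et e = (\<Sum>i\<in>Jx. sc (c i) (mon (ph i) * (Et e :: ('v,'e,'k) ser)))"
    by (simp add: sum_distrib_right)
  also have "\<dots> \<approx> (\<Sum>i\<in>Jx. if tn (ph i) = [] \<or> hd (tn (ph i)) = e then sc (c i) (mon (phe e (ph i))) else 0)"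
  proof (intro eqv_sum)
    fix i assume "i \<in> Jx"
    then have "mon (ph i) * Et e \<approx> (if tn (ph i) = [] \<or> hd (tn (ph i)) = e then mon (phe e (ph i)) else (0 :: ('v,'e,'k) ser))"
      using mon_E[of "ph i" b e] assms by auto
    then show "sc (c i) (mon (ph i) * Et e) \<approx> (if tn (ph i) = [] \<or> hd (tn (ph i)) = e then sc (c i) (mon (phe e (ph i))) else 0)"
      by (cases "tn (ph i) = [] \<or> hd (tn (ph i)) = e") (auto dest: eqv_sc[of _ _ "c i"])
  qed
  also have "\<dots> = (\<Sum>i\<in>{i\<in>Jx. tn (ph i) = [] \<or> hd (tn (ph i)) = e}. sc (c i) (mon (phe e (ph i))))"
    by (rule sum.inter_filter[OF assms(1), symmetric])
  finally show ?thesis .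
qed

lemma realVc: assumes fin: "finite Jx" and val: "\<forall>i\<in>Jx. pw w (gs i)"
  and I: "Ik (\<Sum>i\<in>Jx. sc (c i) (PP w (gs i) * Vt w))"
  shows "\<forall>x\<in>gs ` Jx. (\<Sum>i\<in>{i\<in>Jx. gs i = x}. c i) = 0"
proof -
  have I': "Ik (\<Sum>x\<in>gs ` Jx. sc (\<Sum>i\<in>{i\<in>Jx. gs i = x}. c i) (PP w x * Vt w))"
    using I fin by (simp add: sum_merge[of Jx c "\<lambda>x. PP w x * Vt w" gs])
  show ?thesis using RLV[OF _ _ I'] fin val by auto
qed

lemma realV: assumes fin: "finite Jx" and val: "\<forall>i\<in>Jx. pw w (gs i)"
  and I: "Ik (\<Sum>i\<in>Jx. sc (c i) (PP w (gs i) * Vt w))"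
  shows "(\<Sum>i\<in>Jx. sc (c i) (PP w (gs i) * Vt w)) = 0"
proof -
  have I': "Ik (\<Sum>x\<in>gs ` Jx. sc (\<Sum>i\<in>{i\<in>Jx. gs i = x}. c i) (PP w x * Vt w))"
    using I fin by (simp add: sum_merge[of Jx c "\<lambda>x. PP w x * Vt w" gs])
  have "\<forall>x\<in>gs ` Jx. (\<Sum>i\<in>{i\<in>Jx. gs i = x}. c i) = 0"
    using RLV[OF _ _ I'] fin val by auto
  then show ?thesis using sum_merge_zero[of Jx gs c "\<lambda>x. PP w x * Vt w"] fin by simp
qed

lemma realQ: assumes fin: "finite Jx" and val: "\<forall>i\<in>Jx. pw w (gs i)" and wY: "w \<in> Reg E0 E1 s - X"
  and I: "Ik (\<Sum>i\<in>Jx. sc (c i) (PP w (gs i) * Q w))"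
  shows "(\<Sum>i\<in>Jx. sc (c i) (PP w (gs i) * Q w)) = 0"
proof -
  have I': "Ik (\<Sum>x\<in>gs ` Jx. sc (\<Sum>i\<in>{i\<in>Jx. gs i = x}. c i) (PP w x * Q w))"
    using I fin by (simp add: sum_merge[of Jx c "\<lambda>x. PP w x * Q w" gs])
  have "\<forall>x\<in>gs ` Jx. (\<Sum>i\<in>{i\<in>Jx. gs i = x}. c i) = 0"
    using RLQ[OF _ _ wY I'] fin val by auto
  then show ?thesis using sum_merge_zero[of Jx gs c "\<lambda>x. PP w x * Q w"] fin by simp
qed

lemma single_b:
  fixes ph :: "'i \<Rightarrow> 'v \<times> 'e list \<times> 'e list"
  assumes fin: "finite Ix" and val: "\<forall>i\<in>Ix. vt (ph i) \<and> srcn (ph i) = b \<and> length (tn (ph i)) \<le> D"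
  and I: "Ik (\<Sum>i\<in>Ix. sc (c i) (monk (ph i)))"
  and IH: "\<And>Ix' (ph' :: 'i \<Rightarrow> 'v \<times> 'e list \<times> 'e list) c'. 0 < D \<Longrightarrow> finite Ix' \<Longrightarrow>
      \<forall>i\<in>Ix'. vt (ph' i) \<and> length (tn (ph' i)) \<le> D - 1 \<Longrightarrow>
      Ik (\<Sum>i\<in>Ix'. sc (c' i) (monk (ph' i))) \<Longrightarrow> (\<Sum>i\<in>Ix'. sc (c' i) (monk (ph' i))) \<approx> 0"
  shows "(\<Sum>i\<in>Ix. sc (c i) (monk (ph i))) \<approx> 0"
proof (cases "Ix = {}")
  case True then show ?thesis by simp
next
  case False
  define x where "x = (\<Sum>i\<in>Ix. sc (c i) (monk (ph i) :: ('v,'e,'k) ser))"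
  define I0 where "I0 = {i\<in>Ix. tn (ph i) = []}"
  define x0 where "x0 = (\<Sum>i\<in>I0. sc (c i) (monk (ph i) :: ('v,'e,'k) ser))"
  have Ax: "A x" using I unfolding x_def by (rule I_A)
  have b: "b \<in> E0"
  proof -
    obtain i where i: "i \<in> Ix" using False by auto
    obtain w g n where "ph i = (w, g, n)" by (cases "ph i") auto
    then show ?thesis using val i pw_src[of w n] by (auto simp: srcn_def)
  qed
  have ph0: "ph i = (b, tg (ph i), [])" if "i \<in> I0" for i
    using that val unfolding I0_def by (cases "ph i") (auto simp: srcn_def)
  have mon0: "monk (ph i) = PP b (tg (ph i)) * Vt b" if "i \<in> I0" for i
  proof -
    have "monk (ph i) = monk (b, tg (ph i), [])" using ph0[OF that] by (rule arg_cong)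
    also have "\<dots> = PP b (tg (ph i)) * Vt b" by (simp add: mon_def)
    finally show ?thesis .
  qed
  have pw0: "pw b (tg (ph i))" if "i \<in> I0" for i
    using ph0[OF that] val that unfolding I0_def by (metis vt.simps mem_Collect_eq)
  have x0eq: "x0 = (\<Sum>i\<in>I0. sc (c i) (PP b (tg (ph i)) * Vt b))"
    unfolding x0_def by (intro sum.cong refl) (simp add: mon0)
  have finI0: "finite I0" using fin by (simp add: I0_def)
  have xsplit: "x = x0 + (\<Sum>i\<in>Ix - I0. sc (c i) (monk (ph i)))"
    unfolding x_def x0_def using fin by (metis (no_types, lifting) I0_def mem_Collect_eq subsetI sum.subset_diff add.commute)
  have xV: "x * Vt b \<approx> x"
  proof -
    have "x * Vt b = (\<Sum>i\<in>Ix. sc (c i) (monk (ph i) * Vt b))" unfolding x_def by (simp add: sum_distrib_right)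
    also have "\<dots> \<approx> x" unfolding x_def
    proof (intro eqv_sum eqv_sc)
      fix i assume "i \<in> Ix"
      then show "monk (ph i) * Vt b \<approx> (monk (ph i) :: ('v,'e,'k) ser)" using mon_V[of "ph i" b] val b by auto
    qed
    finally show ?thesis .
  qed
  have hE: "x * Et e \<approx> 0" if D0: "0 < D" and e: "e \<in> Sv b" for e
  proof -
    define Ie where "Ie = {i\<in>Ix. tn (ph i) = [] \<or> hd (tn (ph i)) = e}"
    have 1: "x * Et e \<approx> (\<Sum>i\<in>Ie. sc (c i) (monk (phe e (ph i))))"
      unfolding x_def Ie_def using XEsum[OF fin _ e, of ph c] val by auto
    have "Ik (x * Et e)" using I e unfolding x_def by (intro I_rmul) (auto simp: Sv_def)
    then have 2: "Ik (\<Sum>i\<in>Ie. sc (c i) (monk (phe e (ph i))))" using 1 by (rule I_eqv)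
    have 3: "\<forall>i\<in>Ie. vt (phe e (ph i)) \<and> length (tn (phe e (ph i))) \<le> D - 1"
      using mon_E[of _ b e] val e unfolding Ie_def by fastforce
    have "finite Ie" using fin by (simp add: Ie_def)
    then have "(\<Sum>i\<in>Ie. sc (c i) (monk (phe e (ph i)))) \<approx> 0"
      using IH[OF D0 _ 3 2] by simp
    with 1 show ?thesis by (rule eqv_trans)
  qed
  have EG0: "x * EG b \<approx> 0" if D0: "0 < D"
  proof -
    have "x * EG b = (\<Sum>e\<in>Sv b. (x * Et e) * Gt e)" by (simp add: EG_Sv sum_distrib_left mult.assoc)
    also have "\<dots> \<approx> (\<Sum>e\<in>Sv b. 0 * Gt e)" using hE D0 by (intro eqv_sum eqv_rmul) (auto simp: Sv_def)
    finally show ?thesis by simp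
  qed
  show ?thesis
  proof (cases "Ix - I0 = {}")
    case True
    then have "x = x0" using xsplit by (simp only: sum.empty add_0_right)
    then have "Ik (\<Sum>i\<in>I0. sc (c i) (PP b (tg (ph i)) * Vt b))" using I x0eq unfolding x_def by simp
    then have "x0 = 0" using realV[OF finI0 _] pw0 x0eq by auto
    then show ?thesis using \<open>x = x0\<close> x_def by simp
  next
    case notall: False
    then obtain i1 where i1: "i1 \<in> Ix" "tn (ph i1) \<noteq> []" by (auto simp: I0_def)
    have D0: "0 < D" using i1 val by (metis length_greater_0_conv order_less_le_trans)
    have hdS: "hd (tn (ph i)) \<in> Sv b" if hyp: "i \<in> Ix" "tn (ph i) \<noteq> []" for i
    proof -
      obtain w g n where t: "ph i = (w, g, n)" by (cases "ph i") auto
      then obtain y ys where "n = y # ys" using hyp by (cases n) auto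
      then show ?thesis using t val hyp by (auto simp: Sv_def srcn_def)
    qed
    show ?thesis
    proof (cases "b \<in> X")
      case True
      have "x \<approx> x * Vt b" using xV by (rule eqv_sym)
      also have "\<dots> \<approx> x * EG b" using rel_X[OF True] Ax by (intro eqv_lmul)
      also have "\<dots> \<approx> 0" using EG0[OF D0] .
      finally show ?thesis unfolding x_def .
    next
      case notX: False
      show ?thesis
      proof (cases "b \<in> Reg E0 E1 s")
        case True
        then have bY: "b \<in> Reg E0 E1 s - X" using notX by auto
        have "x * Q b = (\<Sum>i\<in>Ix. sc (c i) (monk (ph i) * Q b))" unfolding x_def by (simp add: sum_distrib_right)
        also have "\<dots> \<approx> (\<Sum>i\<in>Ix. if i \<in> I0 then sc (c i) (PP b (tg (ph i)) * Q b) else 0)"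
        proof (intro eqv_sum)
          fix i assume i: "i \<in> Ix"
          show "sc (c i) (monk (ph i) * Q b) \<approx> (if i \<in> I0 then sc (c i) (PP b (tg (ph i)) * Q b) else 0)"
          proof (cases "i \<in> I0")
            case True
            have "PP b (tg (ph i)) * (Vt b * Q b) \<approx> PP b (tg (ph i)) * (Q b :: ('v,'e,'k) ser)"
              using V_Q[OF b] pw0[OF True] by (intro eqv_lmul) auto
            then show ?thesis using True mon0[OF True] by (auto simp: mult.assoc intro: eqv_sc)
          next
            case False
            obtain w g n where t: "ph i = (w, g, n)" by (cases "ph i") auto
            have "n \<noteq> []" "pw w n" "src w n = b" "pw w g" using False i t val by (auto simp: I0_def srcn_def)
            then have "PP w g * (GG w n * Q b) \<approx> PP w g * (0 :: ('v,'e,'k) ser)"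
              using True by (intro eqv_lmul GG_Q) auto
            then show ?thesis using False t by (auto simp: mon_def mult.assoc dest: eqv_sc[of _ _ "c i"])
          qed
        qed
        also have "\<dots> = (\<Sum>i\<in>I0. sc (c i) (PP b (tg (ph i)) * Q b))"
        proof -
          have "(\<Sum>i\<in>Ix. if i \<in> I0 then sc (c i) (PP b (tg (ph i)) * Q b) else 0) = (\<Sum>i\<in>Ix. if tn (ph i) = [] then sc (c i) (PP b (tg (ph i)) * Q b) else 0)"
            by (intro sum.cong) (auto simp: I0_def)
          also have "\<dots> = (\<Sum>i\<in>I0. sc (c i) (PP b (tg (ph i)) * Q b))"
            unfolding I0_def by (rule sum.inter_filter[OF fin, symmetric])
          finally show ?thesis .
        qed
        finally have xQ: "x * Q b \<approx> (\<Sum>i\<in>I0. sc (c i) (PP b (tg (ph i)) * Q b))" .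
        have "Ik (x * Q b)" using I b unfolding x_def by (intro I_rmul) auto
        then have "Ik (\<Sum>i\<in>I0. sc (c i) (PP b (tg (ph i)) * Q b))" using xQ by (rule I_eqv)
        then have z: "(\<Sum>i\<in>I0. sc (c i) (PP b (tg (ph i)) * Q b)) = 0"
          using realQ[OF finI0 _ bY] pw0 by auto
        have "x \<approx> x * Vt b" using xV by (rule eqv_sym)
        also have "\<dots> = x * Q b + x * EG b" by (simp add: Q_def algebra_simps)
        also have "\<dots> \<approx> 0 + 0" using xQ z EG0[OF D0] by (intro eqv_add) auto
        finally show ?thesis unfolding x_def by simp
      next
        case notReg: False
        define F where "F = (\<lambda>i. hd (tn (ph i))) ` (Ix - I0)"
        have finF: "finite F" using fin by (simp add: F_def)
        have FS: "F \<subseteq> Sv b" using hdS by (auto simp: F_def I0_def)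
        have "infinite (Sv b)"
        proof
          assume "finite (Sv b)"
          moreover have "Sv b \<noteq> {}" using hdS i1 by blast
          ultimately have "b \<in> Reg E0 E1 s" using b by (auto simp: Reg_def Sv_def)
          then show False using notReg by simp
        qed
        then obtain f where f: "f \<in> Sv b" "f \<notin> F" using finF by (meson finite_subset subsetI)
        have If: "{i\<in>Ix. tn (ph i) = [] \<or> hd (tn (ph i)) = f} = I0"
          using f unfolding F_def I0_def by auto
        have 1: "x * Et f \<approx> (\<Sum>i\<in>I0. sc (c i) (monk (phe f (ph i))))"
          unfolding x_def using XEsum[OF fin _ f(1), of ph c] val If by auto
        have phef: "monk (phe f (ph i)) = PP (r f) (tg (ph i) @ [f]) * Vt (r f)" if "i \<in> I0" for i
          using that by (simp add: phe_def I0_def mon_def)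
        have "Ik (x * Et f)" using I f unfolding x_def by (intro I_rmul) (auto simp: Sv_def)
        then have "Ik (\<Sum>i\<in>I0. sc (c i) (monk (phe f (ph i))))" using 1 by (rule I_eqv)
        then have "Ik (\<Sum>i\<in>I0. sc (c i) (PP (r f) (tg (ph i) @ [f]) * Vt (r f)))"
          by (simp add: phef cong: sum.cong)
        moreover have "\<forall>i\<in>I0. pw (r f) (tg (ph i) @ [f])"
          using PP_snoc[of b _ f] pw0 f by (auto simp: Sv_def)
        ultimately have cz: "\<forall>y\<in>(\<lambda>i. tg (ph i) @ [f]) ` I0. (\<Sum>i\<in>{i\<in>I0. tg (ph i) @ [f] = y}. c i) = 0"
          using realVc[OF finI0, of "r f" "\<lambda>i. tg (ph i) @ [f]" c] by blast
        have "x0 = 0"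
        proof -
          have "\<forall>y\<in>(\<lambda>i. tg (ph i)) ` I0. (\<Sum>i\<in>{i\<in>I0. tg (ph i) = y}. c i) = 0"
            using cz by auto
          then show ?thesis unfolding x0eq using sum_merge_zero[OF finI0, of "\<lambda>i. tg (ph i)" c "\<lambda>g. PP b g * Vt b"] by simp
        qed
        have Xe: "(\<Sum>i\<in>{i\<in>Ix - I0. hd (tn (ph i)) = e}. sc (c i) (monk (phe e (ph i)))) \<approx> 0" if e: "e \<in> F" for e
        proof -
          have eS: "e \<in> Sv b" using e FS by auto
          have "x * Et e \<approx> (\<Sum>i\<in>{i\<in>Ix. tn (ph i) = [] \<or> hd (tn (ph i)) = e}. sc (c i) (monk (phe e (ph i))))"
            unfolding x_def using XEsum[OF fin _ eS, of ph c] val by auto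
          also have "{i\<in>Ix. tn (ph i) = [] \<or> hd (tn (ph i)) = e} = I0 \<union> {i\<in>Ix - I0. hd (tn (ph i)) = e}"
            by (auto simp: I0_def)
          also have "(\<Sum>i\<in>I0 \<union> {i\<in>Ix - I0. hd (tn (ph i)) = e}. sc (c i) (monk (phe e (ph i)))) =
              (\<Sum>i\<in>I0. sc (c i) (monk (phe e (ph i)))) + (\<Sum>i\<in>{i\<in>Ix - I0. hd (tn (ph i)) = e}. sc (c i) (monk (phe e (ph i)) :: ('v,'e,'k) ser))"
            using fin by (intro sum.union_disjoint) (auto simp: I0_def)
          finally have a: "x * Et e \<approx> (\<Sum>i\<in>I0. sc (c i) (monk (phe e (ph i)))) + (\<Sum>i\<in>{i\<in>Ix - I0. hd (tn (ph i)) = e}. sc (c i) (monk (phe e (ph i))))" .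
          have "x0 * Et e \<approx> (\<Sum>i\<in>{i\<in>I0. tn (ph i) = [] \<or> hd (tn (ph i)) = e}. sc (c i) (monk (phe e (ph i))))"
            unfolding x0_def using XEsum[OF finI0 _ eS, of ph c] val by (auto simp: I0_def)
          also have "{i\<in>I0. tn (ph i) = [] \<or> hd (tn (ph i)) = e} = I0" by (auto simp: I0_def)
          finally have b0: "(\<Sum>i\<in>I0. sc (c i) (monk (phe e (ph i)))) \<approx> (0 :: ('v,'e,'k) ser)"
            using \<open>x0 = 0\<close> by (auto intro: eqv_sym)
          have "(\<Sum>i\<in>I0. sc (c i) (monk (phe e (ph i)))) + (\<Sum>i\<in>{i\<in>Ix - I0. hd (tn (ph i)) = e}. sc (c i) (monk (phe e (ph i)))) \<approx> (0 :: ('v,'e,'k) ser)"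
            using a hE[OF D0 eS] by (blast intro: eqv_sym eqv_trans)
          from eqv_diff[OF this b0] show ?thesis by simp
        qed
        have "x = (\<Sum>i\<in>Ix - I0. sc (c i) (monk (ph i)))" using xsplit \<open>x0 = 0\<close> by simp
        also have "\<dots> = (\<Sum>e\<in>F. \<Sum>i\<in>{i\<in>Ix - I0. hd (tn (ph i)) = e}. sc (c i) (monk (ph i)))"
          unfolding F_def using fin by (intro sum.image_gen) auto
        also have "\<dots> = (\<Sum>e\<in>F. (\<Sum>i\<in>{i\<in>Ix - I0. hd (tn (ph i)) = e}. sc (c i) (monk (phe e (ph i)))) * Gt e)"
        proof (intro sum.cong refl)
          fix e assume "e \<in> F"
          show "(\<Sum>i\<in>{i\<in>Ix - I0. hd (tn (ph i)) = e}. sc (c i) (monk (ph i))) =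
              (\<Sum>i\<in>{i\<in>Ix - I0. hd (tn (ph i)) = e}. sc (c i) (monk (phe e (ph i)))) * Gt e"
            unfolding sum_distrib_right
          proof (intro sum.cong refl)
            fix i assume i: "i \<in> {i\<in>Ix - I0. hd (tn (ph i)) = e}"
            then have "tn (ph i) \<noteq> []" "hd (tn (ph i)) = e" by (auto simp: I0_def)
            then show "sc (c i) (monk (ph i)) = sc (c i) (monk (phe e (ph i))) * Gt e"
              using mon_Gt[of "ph i"] by (simp add: phe_def)
          qed
        qed
        also have "\<dots> \<approx> (\<Sum>e\<in>F. 0 * Gt e)"
          using Xe FS by (intro eqv_sum eqv_rmul) (auto simp: Sv_def)
        finally show ?thesis unfolding x_def by simp
      qed
    qed
  qed
qed

lemma decomp:
  fixes ph :: "'i \<Rightarrow> 'v \<times> 'e list \<times> 'e list"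
  assumes fin: "finite Ix" and val: "\<forall>i\<in>Ix. vt (ph i) \<and> length (tn (ph i)) \<le> D"
  and I: "Ik (\<Sum>i\<in>Ix. sc (c i) (monk (ph i)))"
  and IH: "\<And>Ix' (ph' :: 'i \<Rightarrow> 'v \<times> 'e list \<times> 'e list) c'. 0 < D \<Longrightarrow> finite Ix' \<Longrightarrow>
      \<forall>i\<in>Ix'. vt (ph' i) \<and> length (tn (ph' i)) \<le> D - 1 \<Longrightarrow>
      Ik (\<Sum>i\<in>Ix'. sc (c' i) (monk (ph' i))) \<Longrightarrow> (\<Sum>i\<in>Ix'. sc (c' i) (monk (ph' i))) \<approx> 0"
  shows "(\<Sum>i\<in>Ix. sc (c i) (monk (ph i))) \<approx> 0"
proof -
  define x where "x = (\<Sum>i\<in>Ix. sc (c i) (monk (ph i)))"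
  define B where "B = (\<lambda>i. srcn (ph i)) ` Ix"
  have "x = (\<Sum>b\<in>B. \<Sum>i\<in>{i\<in>Ix. srcn (ph i) = b}. sc (c i) (monk (ph i)))"
    unfolding x_def B_def using fin by (intro sum.image_gen)
  also have "\<dots> \<approx> (\<Sum>b\<in>B. 0)"
  proof (intro eqv_sum)
    fix b assume bB: "b \<in> B"
    then obtain i0 where i0: "i0 \<in> Ix" "b = srcn (ph i0)" by (auto simp: B_def)
    have b: "b \<in> E0"
    proof -
      obtain w g n where "ph i0 = (w, g, n)" by (cases "ph i0") auto
      then show ?thesis using val i0 pw_src[of w n] by (auto simp: srcn_def)
    qed
    have "x * Vt b = (\<Sum>i\<in>Ix. sc (c i) (monk (ph i) * Vt b))" unfolding x_def by (simp add: sum_distrib_right)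
    also have "\<dots> \<approx> (\<Sum>i\<in>Ix. if srcn (ph i) = b then sc (c i) (monk (ph i)) else 0)"
    proof (intro eqv_sum)
      fix i assume "i \<in> Ix"
      then have "monk (ph i) * Vt b \<approx> (if srcn (ph i) = b then monk (ph i) else 0)" using mon_V[of "ph i" b] val b by auto
      then show "sc (c i) (monk (ph i) * Vt b) \<approx> (if srcn (ph i) = b then sc (c i) (monk (ph i)) else 0)"
        by (cases "srcn (ph i) = b") (auto dest: eqv_sc[of _ _ "c i"])
    qed
    also have "\<dots> = (\<Sum>i\<in>{i\<in>Ix. srcn (ph i) = b}. sc (c i) (monk (ph i)))"
      by (rule sum.inter_filter[OF fin, symmetric])
    finally have xb: "x * Vt b \<approx> (\<Sum>i\<in>{i\<in>Ix. srcn (ph i) = b}. sc (c i) (monk (ph i)))" .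
    have "Ik (x * Vt b)" using I b unfolding x_def by (intro I_rmul) auto
    then have Ib: "Ik (\<Sum>i\<in>{i\<in>Ix. srcn (ph i) = b}. sc (c i) (monk (ph i)))" using xb by (rule I_eqv)
    show "(\<Sum>i\<in>{i\<in>Ix. srcn (ph i) = b}. sc (c i) (monk (ph i))) \<approx> 0"
      by (rule single_b[where b=b, OF _ _ Ib IH]) (use fin val in auto)
  qed
  finally show ?thesis unfolding x_def by simp
qed

lemma main0:
  fixes ph :: "'i \<Rightarrow> 'v \<times> 'e list \<times> 'e list"
  shows "finite Ix \<Longrightarrow> \<forall>i\<in>Ix. vt (ph i) \<and> length (tn (ph i)) \<le> D \<Longrightarrow>
    Ik (\<Sum>i\<in>Ix. sc (c i) (monk (ph i))) \<Longrightarrow> (\<Sum>i\<in>Ix. sc (c i) (monk (ph i))) \<approx> 0"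
proof (induction D arbitrary: Ix ph c)
  case 0
  show ?case by (rule decomp[OF 0(1) 0(2) 0(3)]) simp
next
  case (Suc D)
  show ?case by (rule decomp[OF Suc(2) Suc(3) Suc(4)]) (use Suc.IH in simp)
qed

theorem kernel_zero: assumes "Ik x" shows "x \<approx> 0"
proof -
  have Ax: "A x" using assms by (rule I_A)
  obtain T c where T: "finite T" "\<forall>t\<in>T. vt t" "x \<approx> (\<Sum>t\<in>T. sc (c t) (monk t))"
    using span_set[OF Ax] by blast
  define D where "D = Max (insert 0 ((\<lambda>t. length (tn t)) ` T))"
  have "\<forall>t\<in>T. vt (id t) \<and> length (tn (id t)) \<le> D" using T by (auto simp: D_def)
  moreover have "Ik (\<Sum>t\<in>T. sc (c t) (monk (id t)))" using assms T(3) by (simp add: I_eqv)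
  ultimately have "(\<Sum>t\<in>T. sc (c t) (monk (id t))) \<approx> 0" using main0[OF T(1)] by blast
  then show ?thesis using T(3) by (simp add: eqv_trans)
qed

end

context cg
begin

definition cl :: "('v,'e,'k::field) ser \<Rightarrow> ('v,'e,'k) fa set" where
  "cl x = cclass E0 E1 r s X (unS x)"

lemma cl_mem: "A x \<Longrightarrow> Ser g \<in> Ser ` cl x \<longleftrightarrow> (A (Ser g) \<and> Ser g \<approx> x)"
  unfolding cl_def cclass_def A_def eqv_def J_def by (auto simp: image_iff)

lemma cl_iff: "g \<in> cl x \<longleftrightarrow> A (Ser g) \<and> Ser g \<approx> x"
  unfolding cl_def cclass_def A_def eqv_def J_def by simp

lemma cl_self: "A x \<Longrightarrow> unS x \<in> cl x"
  by (simp add: cl_iff)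

lemma cl_eq: assumes "A x" "A y" shows "cl x = cl y \<longleftrightarrow> x \<approx> y"
proof
  assume "cl x = cl y"
  then have "unS x \<in> cl y" using cl_self[OF assms(1)] by simp
  then show "x \<approx> y" by (simp add: cl_iff)
next
  assume xy: "x \<approx> y"
  show "cl x = cl y"
  proof (rule set_eqI)
    fix g
    show "g \<in> cl x \<longleftrightarrow> g \<in> cl y"
      using xy eqv_sym eqv_trans unfolding cl_iff by blast
  qed
qed

lemma cl_Cohn: "A x \<Longrightarrow> cl x \<in> Cohn E0 E1 r s X"
  unfolding Cohn_def cl_def A_def by auto

lemma Cohn_cl: assumes "S \<in> Cohn E0 E1 r s X" shows "\<exists>x. A (x :: ('v,'e,'k::field) ser) \<and> S = cl x"
proof -
  obtain f where f: "f \<in> FA E0 E1" "S = cclass E0 E1 r s X f" using assms unfolding Cohn_def by auto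
  then show ?thesis unfolding cl_def A_def by (intro exI[of _ "Ser f"]) simp
qed

lemma crep_cl: assumes "A (x :: ('v,'e,'k::field) ser)"
  shows "A (Ser (crep (cl x))) \<and> Ser (crep (cl x)) \<approx> x"
proof -
  have "crep (cl x) \<in> cl x" unfolding crep_def by (rule someI[of "\<lambda>f. f \<in> cl x"]) (rule cl_self[OF assms])
  then show ?thesis by (simp add: cl_iff)
qed

lemma cl_add: assumes "A x" "A y"
  shows "cohn_add E0 E1 r s X (cl x) (cl y) = cl (x + y)"
proof -
  have "cohn_add E0 E1 r s X (cl x) (cl y) = cl (Ser (crep (cl x)) + Ser (crep (cl y)))"
    by (simp add: cohn_add_def cl_def)
  also have "\<dots> = cl (x + y)"
    using crep_cl[OF assms(1)] crep_cl[OF assms(2)] assms by (subst cl_eq) (auto intro: eqv_add)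
  finally show ?thesis .
qed

lemma cl_mult: assumes "A x" "A y"
  shows "cohn_mult E0 E1 r s X (cl x) (cl y) = cl (x * y)"
proof -
  have "cohn_mult E0 E1 r s X (cl x) (cl y) = cl (Ser (crep (cl x)) * Ser (crep (cl y)))"
    by (simp add: cohn_mult_def cl_def)
  also have "\<dots> = cl (x * y)"
    using crep_cl[OF assms(1)] crep_cl[OF assms(2)] assms by (subst cl_eq) (auto intro: eqv_mult)
  finally show ?thesis .
qed

end

theorem mainTheorem6:
  fixes E0 :: "'v set" and E1 :: "'e set" and r s :: "'e \<Rightarrow> 'v" and X :: "'v set"
    and \<pi> :: "('v, 'e, 'k::field) fa set \<Rightarrow> 'a::ring"
  assumes graph: "s ` E1 \<subseteq> E0" "r ` E1 \<subseteq> E0"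
    and X: "X \<subseteq> Reg E0 E1 s"
    and condL: "rel_condL E0 E1 r s X"
    and hom: "cohn_ring_hom E0 E1 r s X \<pi>"
    and i: "\<forall>u \<in> E0 - (Reg E0 E1 s - X). \<pi> (cclass E0 E1 r s X (gen (Vx u))) \<noteq> 0"
    and ii: "\<forall>v \<in> Reg E0 E1 s - X.
               \<pi> (cclass E0 E1 r s X (gen (Vx v) - ee_sum E1 s v)) \<noteq> 0"
    and iii: "\<forall>v \<in> Reg E0 E1 s - X. \<pi> (cclass E0 E1 r s X (ee_sum E1 s v)) \<noteq> 0"
  shows "inj_on \<pi> (Cohn E0 E1 r s X)"
proof -
  interpret cg E0 E1 r s X using graph X by unfold_locales
  define Ik where "Ik x \<longleftrightarrow> A x \<and> \<pi> (cl x) = 0" for x :: "('v,'e,'k) ser"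
  have padd: "\<pi> (cl (x + y)) = \<pi> (cl x) + \<pi> (cl y)" if "A x" "A y" for x y :: "('v,'e,'k) ser"
    using hom that cl_Cohn cl_add[OF that] unfolding cohn_ring_hom_def by metis
  have pmult: "\<pi> (cl (x * y)) = \<pi> (cl x) * \<pi> (cl y)" if "A x" "A y" for x y :: "('v,'e,'k) ser"
    using hom that cl_Cohn cl_mult[OF that] unfolding cohn_ring_hom_def by metis
  interpret kern E0 E1 r s X Ik
  proof
    show "A x" if "Ik x" for x using that by (simp add: Ik_def)
    show "Ik (x + y)" if "Ik x" "Ik y" for x y using that padd by (auto simp: Ik_def)
    show "Ik (z * x)" if "A z" "Ik x" for z x using that pmult by (auto simp: Ik_def)
    show "Ik (x * z)" if "A z" "Ik x" for z x using that pmult by (auto simp: Ik_def)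
    show "Ik y" if "Ik x" "x \<approx> y" for x y
    proof -
      have "A y" using that eqv_A by (auto simp: Ik_def)
      then have "cl x = cl y" using that cl_eq by (auto simp: Ik_def)
      then show ?thesis using that \<open>A y\<close> by (simp add: Ik_def)
    qed
    show "\<not> Ik (Vt u)" if "u \<in> E0" "u \<notin> Reg E0 E1 s - X" for u
      using i that by (simp add: Ik_def cl_def Vt_def)
    show "\<not> Ik (Q u)" if "u \<in> Reg E0 E1 s - X" for u
      using ii that by (simp add: Ik_def cl_def Q_def Vt_def unS_EG)
    show "rel_condL E0 E1 r s X" by (rule condL)
  qed
  show ?thesis
  proof (rule inj_onI)
    fix S T assume S: "S \<in> Cohn E0 E1 r s X" and T: "T \<in> Cohn E0 E1 r s X" and eq: "\<pi> S = \<pi> T"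
    obtain x :: "('v,'e,'k) ser" where x: "A x" "S = cl x" using Cohn_cl[OF S] by blast
    obtain y :: "('v,'e,'k) ser" where y: "A y" "T = cl y" using Cohn_cl[OF T] by blast
    have "\<pi> (cl x) = \<pi> (cl (y + (x - y)))" by simp
    also have "\<dots> = \<pi> (cl y) + \<pi> (cl (x - y))" using x y by (intro padd) auto
    finally have "\<pi> (cl (x - y)) = 0" using eq x y by simp
    then have "Ik (x - y)" using x y by (auto simp: Ik_def)
    then have "x - y \<approx> 0" by (rule kernel_zero)
    then have "x \<approx> y" by (simp add: eqv_def)
    then show "S = T" using x(2) y(2) cl_eq[OF x(1) y(1)] by simp
  qed
qed

end
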